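(* Let $d\ge3$, $z\in(-1,1)$ and $\xi\in\mathbb S^{d-1}$. Let $\mathrm d\mathscr C_z^{\xi}$ and $\mathrm d\mathscr C_0^{g_z(\xi)}$ be the volume forms of the oriented $(d-2)$-dimensional manifolds $\mathscr C_z^{\xi}$ and $\mathscr C_0^{g_z(\xi)}$. Then, at every $\eta\in\mathscr C_0^{g_z(\xi)}$, $$h_z^*\bigl(\mathrm d\mathscr C_z^{\xi}\bigr)=\Bigl(\frac{\sqrt{1-z^2}}{1+z\eta_d}\Bigr)^{d-2}\mathrm d\mathscr C_0^{g_z(\xi)}.$$ Moreover, for the volume form $\mathrm d\mathbb S^{d-1}$ of the sphere, at every $\eta\in\mathbb S^{d-1}$, $$h_z^*\bigl(\mathrm d\mathbb S^{d-1}\bigr)=\Bigl(\frac{\sqrt{1-z^2}}{1+z\eta_d}\Bigr)^{d-1}\mathrm d\mathbb S^{d-1}.$$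
   Context: $\mathbb S^{d-1}$ is the unit sphere in $\mathbb R^d$, and $\epsilon^1,\dots,\epsilon^d$ is the standard basis of $\mathbb R^d$. Orientation of the sphere: a basis $x^1,\dots,x^{d-1}$ of $T_\xi\mathbb S^{d-1}=\xi^\perp$ is positively oriented if $\det[\xi,x^1,\dots,x^{d-1}]>0$. Subspheres: for $\zeta\in\mathbb S^{d-1}$ and $t\in[-1,1]$ let $S(\zeta,t)=\{\eta\in\mathbb S^{d-1}:\langle\zeta,\eta\rangle=t\}$. A basis $e^1,\dots,e^{d-2}$ of $T_\eta S(\zeta,t)$ is positively oriented if $\det(\eta,\zeta,e^1,\dots,e^{d-2})>0$. The volume form is the $(d-2)$-form that equals $1$ on positively oriented orthonormal bases. Set $\mathscr C_z^{\xi}=S(\xi,z\xi_d)$. The maps $h_z$ and $g_z$ are $$h_z(\eta)=\sum_{i=1}^{d-1}\frac{\sqrt{1-z^2}}{1+z\eta_d}\eta_i\epsilon^i+\frac{z+\eta_d}{1+z\eta_d}\epsilon^d,$$ $$g_z(\xi)=(1-z^2\xi_d^2)^{-1/2}\Bigl(\sum_{i=1}^{d-1}\xi_i\epsilon^i+\sqrt{1-z^2}\,\xi_d\epsilon^d\Bigr).$$ The map $h_z$ sends $\mathscr C_0^{g_z(\xi)}$ onto $\mathscr C_z^{\xi}$. Pullbacks of forms are defined in the usual way via the Jacobian of $h_z$. *)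

theory Defs
  imports "HOL-Analysis.Analysis"
begin

(* Points of R^d are vectors  real^'n  with CARD('n) = d.  The index type is
   linearly ordered; the k-th coordinate (k = 1..d) is the k-th smallest index,
   so the d-th (last) coordinate is the index  Max UNIV. *)

definition rank_idx :: "'n::{finite,linorder} \<Rightarrow> nat" where
  "rank_idx i = card {j. j < i}"

definition lastidx :: "'n::{finite,linorder}" where
  "lastidx = Max UNIV"

definition lastc :: "real^'n::{finite,linorder} \<Rightarrow> real" where
  "lastc x = x $ lastidx"

definition detl :: "(real^'n::{finite,linorder}) list \<Rightarrow> real" where
  "detl vs = det (\<chi> (i::'n). vs ! rank_idx i)"

definition hz :: "real \<Rightarrow> real^'n::{finite,linorder} \<Rightarrow> real^'n::{finite,linorder}" where
  "hz z \<eta> = (\<chi> i. if i = lastidx then (z + lastc \<eta>) / (1 + z * lastc \<eta>)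
                     else sqrt (1 - z\<^sup>2) / (1 + z * lastc \<eta>) * \<eta> $ i)"

definition gz :: "real \<Rightarrow> real^'n::{finite,linorder} \<Rightarrow> real^'n::{finite,linorder}" where
  "gz z \<xi> = (1 / sqrt (1 - z\<^sup>2 * (lastc \<xi>)\<^sup>2)) *\<^sub>R
               (\<chi> i. if i = lastidx then sqrt (1 - z\<^sup>2) * \<xi> $ i else \<xi> $ i)"

definition subsph :: "real^'n::{finite,linorder} \<Rightarrow> real \<Rightarrow> (real^'n::{finite,linorder}) set" where
  "subsph \<zeta> t = {\<eta> \<in> sphere 0 1. \<zeta> \<bullet> \<eta> = t}"

definition Cz :: "real \<Rightarrow> real^'n::{finite,linorder} \<Rightarrow> (real^'n::{finite,linorder}) set" where
  "Cz z \<xi> = subsph \<xi> (z * lastc \<xi>)"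

definition tan_sphere :: "real^'n::{finite,linorder} \<Rightarrow> (real^'n::{finite,linorder}) set" where
  "tan_sphere \<eta> = {v. v \<bullet> \<eta> = 0}"

definition tan_subsph :: "real^'n::{finite,linorder} \<Rightarrow> real^'n::{finite,linorder} \<Rightarrow> (real^'n::{finite,linorder}) set" where
  "tan_subsph \<zeta> \<eta> = {v. v \<bullet> \<eta> = 0 \<and> v \<bullet> \<zeta> = 0}"

definition alt_form_on :: "(real^'n::{finite,linorder}) set \<Rightarrow> nat \<Rightarrow> ((real^'n::{finite,linorder}) list \<Rightarrow> real) \<Rightarrow> bool" where
  "alt_form_on V k \<omega> \<longleftrightarrow>
     (\<forall>vs. \<not> (length vs = k \<and> set vs \<subseteq> V) \<longrightarrow> \<omega> vs = 0) \<and>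
     (\<forall>vs i a b u w. length vs = k \<and> set vs \<subseteq> V \<and> i < k \<and> u \<in> V \<and> w \<in> V \<longrightarrow>
        \<omega> (vs[i := a *\<^sub>R u + b *\<^sub>R w]) = a * \<omega> (vs[i := u]) + b * \<omega> (vs[i := w])) \<and>
     (\<forall>vs i j. length vs = k \<and> set vs \<subseteq> V \<and> i < k \<and> j < k \<and> i \<noteq> j \<and> vs ! i = vs ! j
        \<longrightarrow> \<omega> vs = 0)"

definition onb_list :: "(real^'n::{finite,linorder}) set \<Rightarrow> nat \<Rightarrow> (real^'n::{finite,linorder}) list \<Rightarrow> bool" where
  "onb_list V k es \<longleftrightarrow> length es = k \<and> set es \<subseteq> V \<and> span (set es) = V \<and>
     (\<forall>i<k. \<forall>j<k. es ! i \<bullet> es ! j = (if i = j then 1 else 0))"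

definition volform :: "(real^'n::{finite,linorder}) set \<Rightarrow> nat \<Rightarrow> ((real^'n::{finite,linorder}) list \<Rightarrow> bool)
     \<Rightarrow> (real^'n::{finite,linorder}) list \<Rightarrow> real" where
  "volform V k posor = (THE \<omega>. alt_form_on V k \<omega> \<and>
      (\<forall>es. onb_list V k es \<and> posor es \<longrightarrow> \<omega> es = 1))"

definition dSphere :: "real^'n::{finite,linorder} \<Rightarrow> (real^'n::{finite,linorder}) list \<Rightarrow> real" where
  "dSphere \<eta> = volform (tan_sphere \<eta>) (CARD('n) - 1) (\<lambda>xs. detl (\<eta> # xs) > 0)"

definition dSub :: "real^'n::{finite,linorder} \<Rightarrow> real^'n::{finite,linorder} \<Rightarrow> (real^'n::{finite,linorder}) list \<Rightarrow> real" where
  "dSub \<zeta> \<eta> = volform (tan_subsph \<zeta> \<eta>) (CARD('n) - 2) (\<lambda>es. detl (\<eta> # \<zeta> # es) > 0)"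

end

theory Submission
  imports Defs
begin

lemma rank_lt: "rank_idx (i::'n::{finite,linorder}) < CARD('n)"
  unfolding rank_idx_def by (rule psubset_card_mono) auto

lemma rank_mono: "(i::'n::{finite,linorder}) < j \<Longrightarrow> rank_idx i < rank_idx j"
  unfolding rank_idx_def by (rule psubset_card_mono) auto

lemma rank_inj: "inj (rank_idx :: 'n::{finite,linorder} \<Rightarrow> nat)"
  by (metis injI linorder_neq_iff order_less_irrefl rank_mono)

lemma rank_bij: "bij_betw (rank_idx :: 'n::{finite,linorder} \<Rightarrow> nat) UNIV {..<CARD('n)}"
proof -
  have "rank_idx ` (UNIV::'n set) \<subseteq> {..<CARD('n)}" using rank_lt by auto
  moreover have "card (rank_idx ` (UNIV::'n set)) = card {..<CARD('n)}"
    using card_image[OF rank_inj] by simp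
  ultimately have "rank_idx ` (UNIV::'n set) = {..<CARD('n)}"
    by (simp add: card_subset_eq)
  thus ?thesis using rank_inj by (simp add: bij_betw_def)
qed

lemma rank_surj: "k < CARD('n) \<Longrightarrow> \<exists>i::'n::{finite,linorder}. rank_idx i = k"
  using rank_bij unfolding bij_betw_def by (metis imageE lessThan_iff)

lemma rank_last: "rank_idx (lastidx :: 'n::{finite,linorder}) = CARD('n) - 1"
proof -
  have "{j. j < (lastidx::'n)} = UNIV - {lastidx}"
    unfolding lastidx_def using Max_ge[of "UNIV::'n set"] by (auto simp: order.not_eq_order_implies_strict)
  thus ?thesis unfolding rank_idx_def by (simp add: card_Diff_singleton)
qed

lemma smult_R: "c *s (x::real^'n) = c *\<^sub>R x"
  by (simp add: vec_eq_iff)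

definition rowsL :: "(real^'n::{finite,linorder}) list \<Rightarrow> real^'n::{finite,linorder}^'n::{finite,linorder}" where
  "rowsL xs = (\<chi> i. xs ! rank_idx i)"

lemma detl_rowsL: "detl xs = det (rowsL xs)"
  unfolding detl_def rowsL_def ..

lemma rows_rowsL:
  fixes xs :: "(real^'n::{finite,linorder}) list"
  assumes l: "length xs = CARD('n)"
  shows "rows (rowsL xs) = set xs"
proof -
  have "rows (rowsL xs) = (\<lambda>i. xs ! rank_idx i) ` (UNIV::'n set)"
    unfolding rows_def row_def rowsL_def by (auto simp: vec_lambda_eta)
  also have "\<dots> = (\<lambda>k. xs ! k) ` (rank_idx ` (UNIV::'n set))" by (simp add: image_image)
  also have "\<dots> = (\<lambda>k. xs ! k) ` {..<length xs}" using rank_bij[where 'n='n] l by (simp add: bij_betw_def)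
  also have "\<dots> = set xs" by (auto simp: in_set_conv_nth)
  finally show ?thesis .
qed

lemma detl_lin:
  fixes xs :: "(real^'n::{finite,linorder}) list"
  assumes "length xs = CARD('n)" "m < CARD('n)"
  shows "detl (xs[m := a *\<^sub>R u + b *\<^sub>R w]) = a * detl (xs[m := u]) + b * detl (xs[m := w])"
proof -
  obtain k :: 'n where k: "rank_idx k = m" using rank_surj assms(2) by blast
  have eq: "\<And>v. rowsL (xs[m := v]) = (\<chi> i. if i = k then v else xs ! rank_idx i)"
    using assms k rank_inj rank_lt by (auto simp: rowsL_def vec_eq_iff nth_list_update dest: injD[OF rank_inj])
  have "det (\<chi> i. if i = k then a *\<^sub>R u + b *\<^sub>R w else xs ! rank_idx i)
     = det (\<chi> i. if i = k then a *s u else xs ! rank_idx i) + det (\<chi> i. if i = k then b *s w else xs ! rank_idx i)"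
    using det_row_add[of k "\<lambda>_. a *s u" "\<lambda>_. b *s w" "\<lambda>i. xs ! rank_idx i"] by (simp only: smult_R)
  also have "\<dots> = a * det (\<chi> i. if i = k then u else xs ! rank_idx i) + b * det (\<chi> i. if i = k then w else xs ! rank_idx i)"
    using det_row_mul[of k a "\<lambda>_. u" "\<lambda>i. xs ! rank_idx i"] det_row_mul[of k b "\<lambda>_. w" "\<lambda>i. xs ! rank_idx i"] by simp
  finally show ?thesis unfolding detl_rowsL eq .
qed

lemma detl_eq_rows:
  fixes xs :: "(real^'n::{finite,linorder}) list"
  assumes "length xs = CARD('n)" "i < CARD('n)" "j < CARD('n)" "i \<noteq> j" "xs ! i = xs ! j"
  shows "detl xs = 0"
proof -
  obtain a :: 'n where a: "rank_idx a = i" using rank_surj assms by blast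
  obtain b :: 'n where b: "rank_idx b = j" using rank_surj assms by blast
  have "a \<noteq> b" using a b assms by auto
  moreover have "row a (rowsL xs) = row b (rowsL xs)" using a b assms by (simp add: row_def rowsL_def)
  ultimately show ?thesis unfolding detl_rowsL by (rule det_identical_rows)
qed

lemma detl_not_distinct:
  fixes xs :: "(real^'n::{finite,linorder}) list"
  assumes "length xs = CARD('n)" "\<not> distinct xs"
  shows "detl xs = 0"
  using assms detl_eq_rows by (metis distinct_conv_nth)

lemma detl_dependent:
  fixes xs :: "(real^'n::{finite,linorder}) list"
  assumes "length xs = CARD('n)" "dependent (set xs)"
  shows "detl xs = 0"
proof -
  have "vec.dependent (rows (rowsL xs))" using assms rows_rowsL[of xs] by (simp add: dependent_vec_eq)
  thus ?thesis unfolding detl_rowsL by (rule det_dependent_rows)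
qed


lemma alt_zero_out: "alt_form_on V k \<omega> \<Longrightarrow> \<not> (length vs = k \<and> set vs \<subseteq> V) \<Longrightarrow> \<omega> vs = 0"
  unfolding alt_form_on_def by blast

lemma alt_lin: "alt_form_on V k \<omega> \<Longrightarrow> length vs = k \<Longrightarrow> set vs \<subseteq> V \<Longrightarrow> i < k \<Longrightarrow> u \<in> V \<Longrightarrow> w \<in> V \<Longrightarrow>
   \<omega> (vs[i := a *\<^sub>R u + b *\<^sub>R w]) = a * \<omega> (vs[i := u]) + b * \<omega> (vs[i := w])"
  unfolding alt_form_on_def by blast

lemma alt_eq: "alt_form_on V k \<omega> \<Longrightarrow> length vs = k \<Longrightarrow> set vs \<subseteq> V \<Longrightarrow> i < k \<Longrightarrow> j < k \<Longrightarrow> i \<noteq> j \<Longrightarrow> vs ! i = vs ! j \<Longrightarrow> \<omega> vs = 0"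
  unfolding alt_form_on_def by blast

lemma set_update_sub: "set xs \<subseteq> V \<Longrightarrow> u \<in> V \<Longrightarrow> set (xs[i := u]) \<subseteq> V"
  by (meson set_update_subset_insert insert_subset order_trans)

lemma alt_sum:
  assumes alt: "alt_form_on V k \<omega>" and sV: "subspace V" and l: "length vs = k" and vsV: "set vs \<subseteq> V" and ik: "i < k"
    and fin: "finite S" and SV: "S \<subseteq> V"
  shows "\<omega> (vs[i := (\<Sum>e\<in>S. c e *\<^sub>R e)]) = (\<Sum>e\<in>S. c e * \<omega> (vs[i := e]))"
  using fin SV
proof (induction S rule: finite_induct)
  case empty
  have "vs ! i \<in> V" using vsV l ik by auto
  hence "\<omega> (vs[i := 0 *\<^sub>R vs ! i + 0 *\<^sub>R vs ! i]) = 0" using alt_lin[OF alt l vsV ik, of "vs ! i" "vs ! i" 0 0] by simp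
  thus ?case by simp
next
  case (insert x F)
  have FV: "(\<Sum>e\<in>F. c e *\<^sub>R e) \<in> V" using insert sV by (auto intro: subspace_sum subspace_scale)
  have "\<omega> (vs[i := (\<Sum>e\<in>insert x F. c e *\<^sub>R e)]) = \<omega> (vs[i := c x *\<^sub>R x + 1 *\<^sub>R (\<Sum>e\<in>F. c e *\<^sub>R e)])"
    using insert by simp
  also have "\<dots> = c x * \<omega> (vs[i := x]) + 1 * \<omega> (vs[i := (\<Sum>e\<in>F. c e *\<^sub>R e)])"
    using alt_lin[OF alt l vsV ik] insert FV by blast
  also have "\<dots> = (\<Sum>e\<in>insert x F. c e * \<omega> (vs[i := e]))" using insert by simp
  finally show ?case .
qed

lemma alt_swap:
  assumes alt: "alt_form_on V k \<omega>" and sV: "subspace V" and l: "length vs = k" and vsV: "set vs \<subseteq> V"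
    and ij: "i < k" "j < k" "i \<noteq> j" and uV: "u \<in> V" and wV: "w \<in> V"
  shows "\<omega> (vs[i := u, j := w]) = - \<omega> (vs[i := w, j := u])"
proof -
  have sw: "u + w \<in> V" using sV uV wV by (simp add: subspace_add)
  have lin_i: "\<And>xs a b p q. length xs = k \<Longrightarrow> set xs \<subseteq> V \<Longrightarrow> p \<in> V \<Longrightarrow> q \<in> V \<Longrightarrow>
     \<omega> (xs[i := a *\<^sub>R p + b *\<^sub>R q]) = a * \<omega> (xs[i := p]) + b * \<omega> (xs[i := q])"
    using alt_lin[OF alt] ij by blast
  have lin_j: "\<And>xs a b p q. length xs = k \<Longrightarrow> set xs \<subseteq> V \<Longrightarrow> p \<in> V \<Longrightarrow> q \<in> V \<Longrightarrow>
     \<omega> (xs[j := a *\<^sub>R p + b *\<^sub>R q]) = a * \<omega> (xs[j := p]) + b * \<omega> (xs[j := q])"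
    using alt_lin[OF alt] ij by blast
  have sub2: "\<And>p q. p \<in> V \<Longrightarrow> q \<in> V \<Longrightarrow> set (vs[i := p, j := q]) \<subseteq> V"
    using vsV set_update_sub by metis
  have z: "\<And>p. p \<in> V \<Longrightarrow> \<omega> (vs[i := p, j := p]) = 0"
    by (rule alt_eq[OF alt _ sub2 ij]) (use l ij in auto)
  define X where "X = vs[i := u + w]"
  have X: "length X = k" "set X \<subseteq> V" using l vsV sw set_update_sub[of vs V "u+w" i] by (auto simp: X_def)
  have "0 = \<omega> (vs[i := u + w, j := u + w])" using z[OF sw] by simp
  also have "\<dots> = \<omega> (X[j := 1 *\<^sub>R u + 1 *\<^sub>R w])" by (simp add: X_def)
  also have "\<dots> = \<omega> (X[j := u]) + \<omega> (X[j := w])" using lin_j[OF X uV wV, of 1 1] by simp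
  also have "X[j := u] = (vs[j := u])[i := 1 *\<^sub>R u + 1 *\<^sub>R w]" using ij by (simp add: X_def list_update_swap)
  also have "X[j := w] = (vs[j := w])[i := 1 *\<^sub>R u + 1 *\<^sub>R w]" using ij by (simp add: X_def list_update_swap)
  also have "\<omega> ((vs[j := u])[i := 1 *\<^sub>R u + 1 *\<^sub>R w]) = \<omega> ((vs[j := u])[i := u]) + \<omega> ((vs[j := u])[i := w])"
    using lin_i[of "vs[j := u]" u w 1 1] l vsV uV wV by (simp add: set_update_sub)
  also have "\<omega> ((vs[j := w])[i := 1 *\<^sub>R u + 1 *\<^sub>R w]) = \<omega> ((vs[j := w])[i := u]) + \<omega> ((vs[j := w])[i := w])"
    using lin_i[of "vs[j := w]" u w 1 1] l vsV uV wV by (simp add: set_update_sub)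
  also have "(vs[j := u])[i := u] = vs[i := u, j := u]" using ij by (simp add: list_update_swap)
  also have "(vs[j := u])[i := w] = vs[i := w, j := u]" using ij by (simp add: list_update_swap)
  also have "(vs[j := w])[i := u] = vs[i := u, j := w]" using ij by (simp add: list_update_swap)
  also have "(vs[j := w])[i := w] = vs[i := w, j := w]" using ij by (simp add: list_update_swap)
  finally show ?thesis using z uV wV by simp
qed


lemma alt_perm_zero:
  assumes alt: "alt_form_on V k \<omega>" and sV: "subspace V" and les: "length es = k" and esV: "set es \<subseteq> V"
    and des: "distinct es" and z: "\<omega> es = 0"
  shows "length vs = k \<Longrightarrow> distinct vs \<Longrightarrow> set vs = set es \<Longrightarrow> \<omega> vs = 0"
proof (induction "card {i. i < k \<and> vs ! i \<noteq> es ! i}" arbitrary: vs rule: less_induct)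
  case less
  show ?case
  proof (cases "\<forall>i<k. vs ! i = es ! i")
    case True
    hence "vs = es" using less.prems les by (simp add: nth_equalityI)
    thus ?thesis using z by simp
  next
    case False
    then obtain i where i: "i < k" "vs ! i \<noteq> es ! i" by blast
    have "es ! i \<in> set vs" using less.prems i les by auto
    then obtain j where j: "j < k" "vs ! j = es ! i" by (metis in_set_conv_nth less.prems(1))
    have ij: "i \<noteq> j" using i j by auto
    define vs' where "vs' = vs[i := vs ! j, j := vs ! i]"
    have vsV: "set vs \<subseteq> V" using less.prems esV by simp
    have vjV: "vs ! j \<in> V" "vs ! i \<in> V" using vsV less.prems(1) i(1) j(1) by (auto dest: nth_mem)
    have "\<omega> vs = \<omega> (vs[i := vs ! i, j := vs ! j])" by simp
    also have "\<dots> = - \<omega> vs'" unfolding vs'_def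
      by (rule alt_swap[OF alt sV less.prems(1) vsV i(1) j(1) ij vjV(2) vjV(1)])
    finally have eq: "\<omega> vs = - \<omega> vs'" .
    have l'1: "length vs' = k" using less.prems by (simp add: vs'_def)
    have l'2: "distinct vs'" unfolding vs'_def by (subst distinct_swap) (use less.prems i j in auto)
    have l'3: "set vs' = set es" unfolding vs'_def by (subst set_swap) (use less.prems i j in auto)
    note l' = l'1 l'2 l'3
    have sub: "{p. p < k \<and> vs' ! p \<noteq> es ! p} \<subset> {p. p < k \<and> vs ! p \<noteq> es ! p}"
    proof
      show "{p. p < k \<and> vs' ! p \<noteq> es ! p} \<subseteq> {p. p < k \<and> vs ! p \<noteq> es ! p}"
      proof safe
        fix p assume p: "p < k" "vs' ! p \<noteq> es ! p" "vs ! p = es ! p"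
        have "p \<noteq> i" using p i j less.prems by (auto simp: vs'_def nth_list_update)
        moreover have "p \<noteq> j"
        proof
          assume "p = j"
          hence "es ! i = es ! j" using p j by simp
          thus False using des ij i j les by (simp add: nth_eq_iff_index_eq)
        qed
        ultimately show False using p by (simp add: vs'_def nth_list_update)
      qed
      show "{p. p < k \<and> vs' ! p \<noteq> es ! p} \<noteq> {p. p < k \<and> vs ! p \<noteq> es ! p}"
      proof
        assume "{p. p < k \<and> vs' ! p \<noteq> es ! p} = {p. p < k \<and> vs ! p \<noteq> es ! p}"
        moreover have "vs' ! i = es ! i" using i j less.prems ij by (simp add: vs'_def nth_list_update)
        ultimately show False using i by blast
      qed
    qed
    have "card {p. p < k \<and> vs' ! p \<noteq> es ! p} < card {p. p < k \<and> vs ! p \<noteq> es ! p}"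
      by (rule psubset_card_mono[OF _ sub]) simp
    hence "\<omega> vs' = 0" using less.hyps l' by blast
    thus ?thesis using eq by simp
  qed
qed

lemma alt_zero_basis:
  assumes alt: "alt_form_on V k \<omega>" and sV: "subspace V" and les: "length es = k" and esV: "set es \<subseteq> V"
    and spV: "V \<subseteq> span (set es)" and des: "distinct es" and z: "\<omega> es = 0"
  shows "\<omega> vs = 0"
proof -
  have claim: "\<forall>vs. length vs = k \<longrightarrow> set vs \<subseteq> V \<longrightarrow> (\<forall>i. m \<le> i \<and> i < k \<longrightarrow> vs ! i \<in> set es) \<longrightarrow> \<omega> vs = 0" for m
  proof (induction m)
    case 0
    show ?case
    proof (intro allI impI)
      fix vs assume l: "length vs = k" and vsV: "set vs \<subseteq> V" and a: "\<forall>i. 0 \<le> i \<and> i < k \<longrightarrow> vs ! i \<in> set es"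
      have sub: "set vs \<subseteq> set es" using a l by (auto simp: in_set_conv_nth)
      show "\<omega> vs = 0"
      proof (cases "distinct vs")
        case True
        have "card (set vs) = card (set es)" using True des l les by (simp add: distinct_card)
        hence "set vs = set es" using sub by (simp add: card_subset_eq)
        thus ?thesis using alt_perm_zero[OF alt sV les esV des z l True] by simp
      next
        case False
        then obtain i j where "i < k" "j < k" "i \<noteq> j" "vs ! i = vs ! j" using l by (auto simp: distinct_conv_nth)
        thus ?thesis using alt_eq[OF alt l vsV] by blast
      qed
    qed
  next
    case (Suc m)
    show ?case
    proof (intro allI impI)
      fix vs assume l: "length vs = k" and vsV: "set vs \<subseteq> V" and a: "\<forall>i. Suc m \<le> i \<and> i < k \<longrightarrow> vs ! i \<in> set es"
      show "\<omega> vs = 0"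
      proof (cases "m < k")
        case False
        thus ?thesis using Suc.IH l vsV a by auto
      next
        case True
        have "vs ! m \<in> V" using vsV l True by auto
        hence "vs ! m \<in> span (set es)" using spV by auto
        then obtain c where c: "vs ! m = (\<Sum>e\<in>set es. c e *\<^sub>R e)"
          using span_finite[of "set es"] by (auto simp: scalar_mult_eq_scaleR)
        have "\<omega> vs = \<omega> (vs[m := (\<Sum>e\<in>set es. c e *\<^sub>R e)])" by (metis c list_update_id)
        also have "\<dots> = (\<Sum>e\<in>set es. c e * \<omega> (vs[m := e]))"
          by (rule alt_sum[OF alt sV l vsV True _ esV]) simp
        also have "\<dots> = 0"
        proof (rule sum.neutral, rule ballI)
          fix e assume e: "e \<in> set es"
          have "\<omega> (vs[m := e]) = 0"
            using Suc.IH[rule_format, of "vs[m := e]"] l e esV vsV a set_update_sub[of vs V e m]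
            by (auto simp: nth_list_update)
          thus "c e * \<omega> (vs[m := e]) = 0" by simp
        qed
        finally show ?thesis .
      qed
    qed
  qed
  show ?thesis
  proof (cases "length vs = k \<and> set vs \<subseteq> V")
    case True thus ?thesis using claim[of k] by auto
  next
    case False thus ?thesis using alt_zero_out[OF alt] by blast
  qed
qed

lemma onb_distinct: "onb_list V k es \<Longrightarrow> distinct es"
  unfolding onb_list_def distinct_conv_nth by (metis zero_neq_one)

lemma volform_eq:
  assumes sV: "subspace V" and alt: "alt_form_on V k \<Omega>"
    and one: "\<And>es. onb_list V k es \<Longrightarrow> posor es \<Longrightarrow> \<Omega> es = 1"
    and ex: "onb_list V k es0" "posor es0"
  shows "volform V k posor = \<Omega>"
  unfolding volform_def
proof (rule the_equality)
  show "alt_form_on V k \<Omega> \<and> (\<forall>es. onb_list V k es \<and> posor es \<longrightarrow> \<Omega> es = 1)" using alt one by blast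
next
  fix \<omega> assume w: "alt_form_on V k \<omega> \<and> (\<forall>es. onb_list V k es \<and> posor es \<longrightarrow> \<omega> es = 1)"
  define \<delta> where "\<delta> = (\<lambda>vs. \<omega> vs - \<Omega> vs)"
  have altd: "alt_form_on V k \<delta>"
    using w alt unfolding alt_form_on_def \<delta>_def by (simp add: algebra_simps)
  have "\<delta> es0 = 0" using w one ex by (simp add: \<delta>_def)
  moreover have "length es0 = k" "set es0 \<subseteq> V" "V \<subseteq> span (set es0)" "distinct es0"
    using ex(1) onb_distinct[OF ex(1)] unfolding onb_list_def by auto
  ultimately have "\<And>vs. \<delta> vs = 0" using alt_zero_basis[OF altd sV] by blast
  thus "\<omega> = \<Omega>" by (auto simp: \<delta>_def)
qed


lemma detl_ortho:
  fixes xs :: "(real^'n::{finite,linorder}) list"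
  assumes l: "length xs = CARD('n)" and o: "\<forall>i<CARD('n). \<forall>j<CARD('n). xs ! i \<bullet> xs ! j = (if i = j then 1 else 0)"
  shows "detl xs = 1 \<or> detl xs = -1"
proof -
  have "orthogonal_matrix (rowsL xs)"
    unfolding orthogonal_matrix_orthonormal_rows
  proof (intro conjI allI impI)
    fix i :: 'n
    have "row i (rowsL xs) = xs ! rank_idx i" by (simp add: row_def rowsL_def vec_lambda_eta)
    thus "norm (row i (rowsL xs)) = 1" using o rank_lt[of i] by (simp add: norm_eq_1)
  next
    fix i j :: 'n assume "i \<noteq> j"
    hence "rank_idx i \<noteq> rank_idx j" using rank_inj by (auto dest: injD)
    moreover have "row i (rowsL xs) = xs ! rank_idx i" "row j (rowsL xs) = xs ! rank_idx j"
      by (simp_all add: row_def rowsL_def vec_lambda_eta)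
    ultimately show "orthogonal (row i (rowsL xs)) (row j (rowsL xs))"
      using o rank_lt[of i] rank_lt[of j] by (simp add: orthogonal_def)
  qed
  thus ?thesis unfolding detl_rowsL by (rule det_orthogonal_matrix)
qed

lemma alt_detl_prefix:
  fixes pre :: "(real^'n::{finite,linorder}) list"
  assumes sV: "subspace V" and l: "length pre + k = CARD('n)"
  shows "alt_form_on V k (\<lambda>vs. if length vs = k \<and> set vs \<subseteq> V then c * detl (pre @ vs) else 0)"
  unfolding alt_form_on_def
proof (intro conjI allI impI)
  fix vs and i a b u w
  assume h: "length vs = k \<and> set vs \<subseteq> V \<and> i < k \<and> u \<in> V \<and> w \<in> V"
  have s: "a *\<^sub>R u + b *\<^sub>R w \<in> V" using h sV by (simp add: subspace_add subspace_scale)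
  have in1: "set (vs[i := a *\<^sub>R u + b *\<^sub>R w]) \<subseteq> V" "set (vs[i := u]) \<subseteq> V" "set (vs[i := w]) \<subseteq> V"
    using h s set_update_sub by metis+
  have eqp: "\<And>x. pre @ vs[i := x] = (pre @ vs)[length pre + i := x]" using h by (simp add: list_update_append)
  have "detl ((pre @ vs)[length pre + i := a *\<^sub>R u + b *\<^sub>R w]) =
     a * detl ((pre @ vs)[length pre + i := u]) + b * detl ((pre @ vs)[length pre + i := w])"
    by (rule detl_lin) (use h l in auto)
  thus "(if length (vs[i := a *\<^sub>R u + b *\<^sub>R w]) = k \<and> set (vs[i := a *\<^sub>R u + b *\<^sub>R w]) \<subseteq> V
         then c * detl (pre @ vs[i := a *\<^sub>R u + b *\<^sub>R w]) else 0) =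
        a * (if length (vs[i := u]) = k \<and> set (vs[i := u]) \<subseteq> V then c * detl (pre @ vs[i := u]) else 0) +
        b * (if length (vs[i := w]) = k \<and> set (vs[i := w]) \<subseteq> V then c * detl (pre @ vs[i := w]) else 0)"
    using in1 h by (simp add: eqp algebra_simps)
next
  fix vs and i j
  assume h: "length vs = k \<and> set vs \<subseteq> V \<and> i < k \<and> j < k \<and> i \<noteq> j \<and> vs ! i = vs ! j"
  have "detl (pre @ vs) = 0"
    by (rule detl_eq_rows[of _ "length pre + i" "length pre + j"]) (use h l in \<open>auto simp: nth_append\<close>)
  thus "(if length vs = k \<and> set vs \<subseteq> V then c * detl (pre @ vs) else 0) = 0" by simp
qed auto

lemma onb_flip:
  assumes o: "onb_list V k es" and k: "0 < k" and sV: "subspace V"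
  shows "onb_list V k (es[0 := - (es ! 0)])"
proof -
  have l: "length es = k" and esV: "set es \<subseteq> V" and sp: "span (set es) = V"
    and on: "\<forall>i<k. \<forall>j<k. es ! i \<bullet> es ! j = (if i = j then 1 else 0)"
    using o unfolding onb_list_def by auto
  let ?f = "es[0 := - (es ! 0)]"
  have e0: "es ! 0 \<in> set es" using l k by simp
  have s1: "set ?f \<subseteq> V" using esV e0 sV set_update_sub[of es V "- (es ! 0)" 0]
    by (metis subsetD subspace_neg)
  have "set ?f \<subseteq> span (set es)"
    by (metis e0 s1 sp)
  moreover have "set es \<subseteq> span (set ?f)"
  proof
    fix x assume "x \<in> set es"
    then obtain i where i: "i < k" "x = es ! i" using l by (auto simp: in_set_conv_nth)
    show "x \<in> span (set ?f)"
    proof (cases "i = 0")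
      case True
      have "- (es ! 0) \<in> set ?f" using l k by (simp add: set_update_memI)
      hence "- (- (es ! 0)) \<in> span (set ?f)" by (intro span_neg span_base)
      thus ?thesis using i True by simp
    next
      case False
      hence "?f ! i = x" using i by simp
      hence "x \<in> set ?f" using i l by (metis length_list_update nth_mem)
      thus ?thesis by (rule span_base)
    qed
  qed
  ultimately have "span (set ?f) = span (set es)" by (simp add: span_eq)
  moreover have "\<forall>i<k. \<forall>j<k. ?f ! i \<bullet> ?f ! j = (if i = j then 1 else 0)"
    using on l by (auto simp: nth_list_update)
  ultimately show ?thesis using s1 sp l unfolding onb_list_def by simp
qed

lemma exists_pos_onb:
  fixes pre :: "(real^'n::{finite,linorder}) list"
  assumes sV: "subspace V" and dV: "dim V = k" and k: "0 < k" and l: "length pre + k = CARD('n)"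
    and nz: "\<And>es. onb_list V k es \<Longrightarrow> detl (pre @ es) \<noteq> 0"
  shows "\<exists>es. onb_list V k es \<and> detl (pre @ es) > 0"
proof -
  obtain B where B: "B \<subseteq> V" "pairwise orthogonal B" "\<And>x. x \<in> B \<Longrightarrow> norm x = 1"
    "independent B" "card B = dim V" "span B = V"
    using orthonormal_basis_subspace[OF sV] by blast
  have "finite B" using B(4) finiteI_independent by blast
  then obtain es where es: "set es = B" "distinct es" using finite_distinct_list by blast
  have les: "length es = k" using es B(5) dV distinct_card by metis
  have "onb_list V k es"
    unfolding onb_list_def
  proof (intro conjI allI impI)
    fix i j assume ij: "i < k" "j < k"
    show "es ! i \<bullet> es ! j = (if i = j then 1 else 0)"
    proof (cases "i = j")
      case True
      have "norm (es ! i) = 1" using B(3) es ij les by auto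
      thus ?thesis using True by (simp add: norm_eq_1)
    next
      case False
      hence "es ! i \<noteq> es ! j" using es(2) ij les by (simp add: nth_eq_iff_index_eq)
      moreover have "es ! i \<in> B" "es ! j \<in> B" using es ij les by auto
      ultimately show ?thesis using B(2) False by (auto simp: pairwise_def orthogonal_def)
    qed
  qed (use les es B in auto)
  note o = this
  show ?thesis
  proof (cases "detl (pre @ es) > 0")
    case True thus ?thesis using o by blast
  next
    case False
    hence neg: "detl (pre @ es) < 0" using nz[OF o] by linarith
    have o2: "onb_list V k (es[0 := - (es ! 0)])" by (rule onb_flip[OF o k sV])
    have eqp: "\<And>x. pre @ es[0 := x] = (pre @ es)[length pre := x]" using les k by (simp add: list_update_append)
    have "detl ((pre @ es)[length pre := (-1) *\<^sub>R (es ! 0) + 0 *\<^sub>R (es ! 0)]) =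
        (-1) * detl ((pre @ es)[length pre := es ! 0]) + 0 * detl ((pre @ es)[length pre := es ! 0])"
      by (rule detl_lin) (use les l k in auto)
    moreover have "(pre @ es)[length pre := es ! 0] = pre @ es"
      using list_update_id[of "pre @ es" "length pre"] by (simp add: nth_append)
    ultimately have "detl (pre @ es[0 := - (es ! 0)]) = - detl (pre @ es)" by (simp add: eqp)
    thus ?thesis using neg o2 by auto
  qed
qed


definition ortho_list :: "('a::real_inner) list \<Rightarrow> bool" where
  "ortho_list xs \<longleftrightarrow> (\<forall>i<length xs. \<forall>j<length xs. xs ! i \<bullet> xs ! j = (if i = j then 1 else 0))"

lemma ortho_cons:
  assumes "x \<bullet> x = 1" "\<forall>y\<in>set xs. x \<bullet> y = 0" "ortho_list xs"
  shows "ortho_list (x # xs)"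
  unfolding ortho_list_def
proof (intro allI impI)
  fix i j assume ij: "i < length (x # xs)" "j < length (x # xs)"
  show "(x # xs) ! i \<bullet> (x # xs) ! j = (if i = j then 1 else 0)"
  proof (cases i)
    case 0
    show ?thesis
    proof (cases j)
      case 0 thus ?thesis using \<open>i = 0\<close> assms by simp
    next
      case (Suc j') thus ?thesis using \<open>i = 0\<close> assms ij by auto
    qed
  next
    case (Suc i')
    show ?thesis
    proof (cases j)
      case 0 thus ?thesis using Suc assms ij by (auto simp: inner_commute)
    next
      case (Suc j') thus ?thesis using \<open>i = Suc i'\<close> assms ij unfolding ortho_list_def by auto
    qed
  qed
qed

lemma onb_ortho: "onb_list V k es \<Longrightarrow> ortho_list es"
  unfolding onb_list_def ortho_list_def by auto

lemma detl_ortho_list: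
  fixes xs :: "(real^'n::{finite,linorder}) list"
  shows "length xs = CARD('n) \<Longrightarrow> ortho_list xs \<Longrightarrow> detl xs = 1 \<or> detl xs = -1"
  using detl_ortho unfolding ortho_list_def by metis

lemma dSphere_eq:
  fixes \<eta> :: "real^'n::{finite,linorder}"
  assumes n: "norm \<eta> = 1" and d: "CARD('n) \<ge> 2"
  shows "dSphere \<eta> = (\<lambda>vs. if length vs = CARD('n) - 1 \<and> set vs \<subseteq> tan_sphere \<eta> then 1 * detl ([\<eta>] @ vs) else 0)"
proof -
  have sV: "subspace (tan_sphere \<eta>)" unfolding tan_sphere_def by (rule subspace_hyperplane2)
  have ee: "\<eta> \<bullet> \<eta> = 1" using n by (simp add: norm_eq_1)
  have pm: "detl (\<eta> # es) = 1 \<or> detl (\<eta> # es) = -1" if o: "onb_list (tan_sphere \<eta>) (CARD('n) - 1) es" for es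
  proof -
    have "set es \<subseteq> tan_sphere \<eta>" "length es = CARD('n) - 1" using o unfolding onb_list_def by auto
    hence "\<forall>y\<in>set es. \<eta> \<bullet> y = 0" "length (\<eta> # es) = CARD('n)" using d by (auto simp: tan_sphere_def inner_commute)
    thus ?thesis using detl_ortho_list ortho_cons[OF ee _ onb_ortho[OF o]] by blast
  qed
  have dim: "dim (tan_sphere \<eta>) = CARD('n) - 1"
  proof -
    have "\<eta> \<noteq> 0" using n by auto
    hence "dim {x. \<eta> \<bullet> x = 0} = CARD('n) - 1" using dim_hyperplane[of \<eta>] by simp
    moreover have "{x. \<eta> \<bullet> x = 0} = tan_sphere \<eta>" by (auto simp: tan_sphere_def inner_commute)
    ultimately show ?thesis by simp
  qed
  obtain es0 where es0: "onb_list (tan_sphere \<eta>) (CARD('n) - 1) es0" "detl ([\<eta>] @ es0) > 0"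
  proof -
    have "\<exists>es. onb_list (tan_sphere \<eta>) (CARD('n) - 1) es \<and> detl ([\<eta>] @ es) > 0"
    proof (rule exists_pos_onb[OF sV dim])
      show "0 < CARD('n) - 1" "length [\<eta>] + (CARD('n) - 1) = CARD('n)" using d by auto
      fix es assume "onb_list (tan_sphere \<eta>) (CARD('n) - 1) es"
      thus "detl ([\<eta>] @ es) \<noteq> 0" using pm by fastforce
    qed
    thus ?thesis using that by blast
  qed
  show ?thesis unfolding dSphere_def
  proof (rule volform_eq[OF sV alt_detl_prefix[OF sV]])
    show "length [\<eta>] + (CARD('n) - 1) = CARD('n)" using d by simp
    show "onb_list (tan_sphere \<eta>) (CARD('n) - 1) es0" by (rule es0)
    show "detl (\<eta> # es0) > 0" using es0 by simp
    fix es assume "onb_list (tan_sphere \<eta>) (CARD('n) - 1) es" "0 < detl (\<eta> # es)"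
    moreover have "length es = CARD('n) - 1 \<and> set es \<subseteq> tan_sphere \<eta>" using calculation(1) unfolding onb_list_def by auto
    ultimately show "(if length es = CARD('n) - 1 \<and> set es \<subseteq> tan_sphere \<eta> then 1 * detl ([\<eta>] @ es) else 0) = 1"
      using pm[of es] by auto
  qed
qed


lemma dSub_eq:
  fixes \<eta> \<zeta> :: "real^'n::{finite,linorder}"
  assumes n1: "norm \<eta> = 1" and n2: "norm \<zeta> = 1" and t1: "\<bar>\<zeta> \<bullet> \<eta>\<bar> < 1" and d: "CARD('n) \<ge> 3"
  shows "dSub \<zeta> \<eta> = (\<lambda>vs. if length vs = CARD('n) - 2 \<and> set vs \<subseteq> tan_subsph \<zeta> \<eta>
            then (1 / sqrt (1 - (\<zeta> \<bullet> \<eta>)\<^sup>2)) * detl ([\<eta>, \<zeta>] @ vs) else 0)"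
proof -
  define t where "t = \<zeta> \<bullet> \<eta>"
  define s0 where "s0 = sqrt (1 - t\<^sup>2)"
  have t1': "t\<^sup>2 < 1" using t1 unfolding t_def by (simp add: abs_square_less_1)
  have s0p: "s0 > 0" unfolding s0_def using t1' by simp
  have s0sq: "s0\<^sup>2 = 1 - t\<^sup>2" unfolding s0_def using t1' by simp
  define \<zeta>' where "\<zeta>' = (1 / s0) *\<^sub>R (\<zeta> - t *\<^sub>R \<eta>)"
  have ee: "\<eta> \<bullet> \<eta> = 1" using n1 by (simp add: norm_eq_1)
  have zz: "\<zeta> \<bullet> \<zeta> = 1" using n2 by (simp add: norm_eq_1)
  have ez': "\<eta> \<bullet> \<zeta>' = 0" unfolding \<zeta>'_def using ee by (simp add: inner_diff_right t_def inner_commute)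
  have z'z': "\<zeta>' \<bullet> \<zeta>' = 1"
  proof -
    have "\<zeta>' \<bullet> \<zeta>' = (1 / s0)\<^sup>2 * ((\<zeta> - t *\<^sub>R \<eta>) \<bullet> (\<zeta> - t *\<^sub>R \<eta>))"
      unfolding \<zeta>'_def by (simp add: power2_eq_square)
    also have "(\<zeta> - t *\<^sub>R \<eta>) \<bullet> (\<zeta> - t *\<^sub>R \<eta>) = 1 - t\<^sup>2"
      using ee zz by (simp add: inner_diff_left inner_diff_right t_def inner_commute power2_eq_square)
    finally show ?thesis using s0sq s0p t1' by (simp add: power_divide)
  qed
  have zdec: "\<zeta> = t *\<^sub>R \<eta> + s0 *\<^sub>R \<zeta>'" unfolding \<zeta>'_def using s0p by simp
  have vz: "v \<bullet> \<zeta> = t * (v \<bullet> \<eta>) + s0 * (v \<bullet> \<zeta>')" for v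
    by (subst zdec) (simp add: inner_add_right)
  let ?V = "tan_subsph \<zeta> \<eta>"
  have Veq: "?V = {v. v \<bullet> \<eta> = 0 \<and> v \<bullet> \<zeta>' = 0}"
    unfolding tan_subsph_def using vz s0p by auto
  have sV: "subspace ?V" unfolding tan_subsph_def
    using subspace_inter[OF subspace_hyperplane2[of \<eta>] subspace_hyperplane2[of \<zeta>]] by (simp add: Int_def)
  have dim: "dim ?V = CARD('n) - 2"
  proof -
    let ?A = "span {\<eta>, \<zeta>'}"
    have h: "dim {y \<in> UNIV. \<forall>x \<in> ?A. orthogonal x y} + dim ?A = dim (UNIV :: (real^'n::{finite,linorder}) set)"
      by (rule dim_subspace_orthogonal_to_vectors) (auto simp: subspace_span)
    have ne: "\<eta> \<noteq> \<zeta>'" using ez' ee by auto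
    have ind: "independent {\<eta>, \<zeta>'}"
      by (rule pairwise_orthogonal_independent) (use ez' ee z'z' ne in \<open>auto simp: pairwise_def orthogonal_def inner_commute\<close>)
    have dA: "dim ?A = 2" using dim_span_eq_card_independent[OF ind] ne by simp
    have "{y. \<forall>x \<in> ?A. orthogonal x y} = ?V"
    proof
      show "{y. \<forall>x \<in> ?A. orthogonal x y} \<subseteq> ?V"
        unfolding Veq by (auto simp: orthogonal_def inner_commute span_base)
      show "?V \<subseteq> {y. \<forall>x \<in> ?A. orthogonal x y}"
      proof safe
        fix y x assume y: "y \<in> ?V" and x: "x \<in> ?A"
        have "orthogonal y x"
          by (rule orthogonal_to_span[OF x]) (use y Veq in \<open>auto simp: orthogonal_def\<close>)
        thus "orthogonal x y" by (simp add: orthogonal_commute)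
      qed
    qed
    thus ?thesis using h dA by simp
  qed
  have pm: "detl (\<eta> # \<zeta> # es) = s0 \<or> detl (\<eta> # \<zeta> # es) = - s0" if o: "onb_list ?V (CARD('n) - 2) es" for es
  proof -
    have es: "set es \<subseteq> ?V" "length es = CARD('n) - 2" using o unfolding onb_list_def by auto
    have o1: "ortho_list (\<zeta>' # es)"
      by (rule ortho_cons[OF z'z' _ onb_ortho[OF o]]) (use es Veq in \<open>auto simp: inner_commute\<close>)
    have o2: "ortho_list (\<eta> # \<zeta>' # es)"
      by (rule ortho_cons[OF ee _ o1]) (use es Veq ez' in \<open>auto simp: inner_commute\<close>)
    have l3: "length (\<eta> # \<zeta>' # es) = CARD('n)" using es d by simp
    have pm1: "detl (\<eta> # \<zeta>' # es) = 1 \<or> detl (\<eta> # \<zeta>' # es) = -1" by (rule detl_ortho_list[OF l3 o2])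
    have "detl ((\<eta> # \<zeta>' # es)[1 := t *\<^sub>R \<eta> + s0 *\<^sub>R \<zeta>']) =
        t * detl ((\<eta> # \<zeta>' # es)[1 := \<eta>]) + s0 * detl ((\<eta> # \<zeta>' # es)[1 := \<zeta>'])"
      by (rule detl_lin[OF l3]) (use d in auto)
    moreover have "detl ((\<eta> # \<zeta>' # es)[1 := \<eta>]) = 0"
      by (rule detl_eq_rows[of _ 0 1]) (use l3 d in auto)
    ultimately have "detl (\<eta> # \<zeta> # es) = s0 * detl (\<eta> # \<zeta>' # es)" using zdec by simp
    thus ?thesis using pm1 by auto
  qed
  obtain es0 where es0: "onb_list ?V (CARD('n) - 2) es0" "detl ([\<eta>, \<zeta>] @ es0) > 0"
  proof -
    have "\<exists>es. onb_list ?V (CARD('n) - 2) es \<and> detl ([\<eta>, \<zeta>] @ es) > 0"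
    proof (rule exists_pos_onb[OF sV dim])
      show "0 < CARD('n) - 2" "length [\<eta>, \<zeta>] + (CARD('n) - 2) = CARD('n)" using d by auto
      fix es assume "onb_list ?V (CARD('n) - 2) es"
      thus "detl ([\<eta>, \<zeta>] @ es) \<noteq> 0" using pm[of es] s0p by auto
    qed
    thus ?thesis using that by blast
  qed
  show ?thesis unfolding dSub_def t_def[symmetric] s0_def[symmetric]
  proof (rule volform_eq[OF sV alt_detl_prefix[OF sV]])
    show "length [\<eta>, \<zeta>] + (CARD('n) - 2) = CARD('n)" using d by simp
    show "onb_list ?V (CARD('n) - 2) es0" by (rule es0)
    show "detl (\<eta> # \<zeta> # es0) > 0" using es0 by simp
    fix es assume "onb_list ?V (CARD('n) - 2) es" "0 < detl (\<eta> # \<zeta> # es)"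
    moreover have "length es = CARD('n) - 2 \<and> set es \<subseteq> ?V" using calculation(1) unfolding onb_list_def by auto
    ultimately show "(if length es = CARD('n) - 2 \<and> set es \<subseteq> ?V then 1 / s0 * detl ([\<eta>, \<zeta>] @ es) else 0) = 1"
      using pm[of es] s0p by auto
  qed
qed


definition eps :: "real^'n::{finite,linorder}" where "eps = axis lastidx 1"

lemma lastc_inner: "lastc x = x \<bullet> eps"
  by (simp add: lastc_def eps_def inner_axis)

lemma eps_eps[simp]: "eps \<bullet> eps = 1"
  by (simp add: eps_def inner_axis)

lemma hz_fun: "hz z = (\<lambda>\<eta>::real^'n::{finite,linorder}. (sqrt (1 - z\<^sup>2) / (1 + z * (\<eta> $ lastidx))) *\<^sub>R (\<eta> - (\<eta> $ lastidx) *\<^sub>R eps)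
     + ((z + \<eta> $ lastidx) / (1 + z * (\<eta> $ lastidx))) *\<^sub>R eps)"
  by (rule ext) (auto simp: hz_def vec_eq_iff eps_def axis_def lastc_def)

definition Lh :: "real \<Rightarrow> real^'n::{finite,linorder} \<Rightarrow> real^'n::{finite,linorder} \<Rightarrow> real^'n::{finite,linorder}" where
  "Lh z \<eta> v = (sqrt (1 - z\<^sup>2) / (1 + z * lastc \<eta>)) *\<^sub>R (v - lastc v *\<^sub>R eps)
     + (- (sqrt (1 - z\<^sup>2) * z * lastc v) / (1 + z * lastc \<eta>)\<^sup>2) *\<^sub>R (\<eta> - lastc \<eta> *\<^sub>R eps)
     + ((1 - z\<^sup>2) * lastc v / (1 + z * lastc \<eta>)\<^sup>2) *\<^sub>R eps"

lemma aux0: "(D::real) \<noteq> 0 \<Longrightarrow> -(f * (inverse D * g * inverse D)) + a/D = (a * D - f * g) / D\<^sup>2"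
  by (simp add: field_simps power2_eq_square)

lemma hz_deriv:
  fixes \<eta> :: "real^'n::{finite,linorder}"
  assumes D: "1 + z * lastc \<eta> \<noteq> 0"
  shows "(hz z has_derivative Lh z \<eta>) (at \<eta>)"
proof -
  let ?l = "lastidx :: 'n"
  let ?D = "1 + z * \<eta> $ ?l"
  have D': "?D \<noteq> 0" using D by (simp add: lastc_def)
  have c: "((\<lambda>x::real^'n::{finite,linorder}. x $ ?l) has_derivative (\<lambda>h. h $ ?l)) (at \<eta>)"
    by (rule bounded_linear.has_derivative[OF bounded_linear_vec_nth]) (rule has_derivative_ident)
  have dD: "((\<lambda>x::real^'n::{finite,linorder}. 1 + z * x $ ?l) has_derivative (\<lambda>h. z * h $ ?l)) (at \<eta>)"
    using has_derivative_add[OF has_derivative_const has_derivative_mult_right[OF c, of z]] by simp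
  have da: "((\<lambda>x::real^'n::{finite,linorder}. sqrt (1 - z\<^sup>2) / (1 + z * x $ ?l)) has_derivative
      (\<lambda>h. - (sqrt (1 - z\<^sup>2) * z * h $ ?l) / ?D\<^sup>2)) (at \<eta>)"
    apply (rule has_derivative_eq_rhs[OF has_derivative_divide[OF has_derivative_const dD D']])
    using D' by (auto simp: power2_eq_square field_simps)
  have db: "((\<lambda>x::real^'n::{finite,linorder}. (z + x $ ?l) / (1 + z * x $ ?l)) has_derivative
      (\<lambda>h. (1 - z\<^sup>2) * h $ ?l / ?D\<^sup>2)) (at \<eta>)"
  proof (rule has_derivative_eq_rhs[OF has_derivative_divide[OF has_derivative_add[OF has_derivative_const c] dD D']], rule ext)
    fix h
    have num: "(0 + h $ ?l) * ?D - (z + \<eta> $ ?l) * (z * h $ ?l) = (1 - z\<^sup>2) * h $ ?l"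
      by (simp add: algebra_simps power2_eq_square)
    show "- (z + \<eta> $ ?l) * (inverse ?D * (z * h $ ?l) * inverse ?D) + (0 + h $ ?l) / ?D = (1 - z\<^sup>2) * h $ ?l / ?D\<^sup>2"
      using aux0[OF D', of "z + \<eta> $ ?l" "z * h $ ?l" "0 + h $ ?l"] num by (simp add: algebra_simps)
  qed
  have dP: "((\<lambda>x::real^'n::{finite,linorder}. x - (x $ ?l) *\<^sub>R eps) has_derivative (\<lambda>h. h - (h $ ?l) *\<^sub>R eps)) (at \<eta>)"
    by (rule has_derivative_diff[OF has_derivative_ident has_derivative_scaleR_left[OF c]])
  have "((\<lambda>x::real^'n::{finite,linorder}. (sqrt (1 - z\<^sup>2) / (1 + z * (x $ ?l))) *\<^sub>R (x - (x $ ?l) *\<^sub>R eps)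
     + ((z + x $ ?l) / (1 + z * (x $ ?l))) *\<^sub>R eps) has_derivative
     (\<lambda>h. ((sqrt (1 - z\<^sup>2) / ?D) *\<^sub>R (h - (h $ ?l) *\<^sub>R eps) + (- (sqrt (1 - z\<^sup>2) * z * h $ ?l) / ?D\<^sup>2) *\<^sub>R (\<eta> - (\<eta> $ ?l) *\<^sub>R eps))
       + ((1 - z\<^sup>2) * h $ ?l / ?D\<^sup>2) *\<^sub>R eps)) (at \<eta>)"
    by (rule has_derivative_add[OF has_derivative_scaleR[OF da dP] has_derivative_scaleR_left[OF db]])
  thus ?thesis unfolding hz_fun by (rule has_derivative_eq_rhs) (simp add: fun_eq_iff Lh_def lastc_def)
qed


lemma matrix_works_real: "linear (f :: real^'n \<Rightarrow> real^'m) \<Longrightarrow> matrix f *v x = f x"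
  by (rule matrix_works) (simp add: linear_def scalar_mult_eq_scaleR)

lemma detl_map_linear:
  fixes xs :: "(real^'n::{finite,linorder}) list"
  assumes lf: "linear f" and l: "length xs = CARD('n)"
  shows "detl (map f xs) = det (matrix f) * detl xs"
proof -
  have "rowsL (map f xs) = rowsL xs ** transpose (matrix f)"
  proof -
    have "rowsL (map f xs) $ i $ j = (rowsL xs ** transpose (matrix f)) $ i $ j" for i j
    proof -
      have "rowsL (map f xs) $ i $ j = f (xs ! rank_idx i) $ j"
        using rank_lt[of i] l by (simp add: rowsL_def)
      also have "\<dots> = (matrix f *v (xs ! rank_idx i)) $ j" using matrix_works_real[OF lf] by simp
      also have "\<dots> = (rowsL xs ** transpose (matrix f)) $ i $ j"
        by (simp add: matrix_vector_mult_def matrix_matrix_mult_def transpose_def rowsL_def mult.commute)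
      finally show ?thesis .
    qed
    thus ?thesis by (simp add: vec_eq_iff)
  qed
  thus ?thesis unfolding detl_rowsL by (simp add: det_mul mult.commute)
qed

lemma det_lastcol:
  fixes A :: "real^'n^'n"
  assumes z: "\<And>i j. i \<noteq> j \<Longrightarrow> j \<noteq> l \<Longrightarrow> A $ i $ j = 0"
  shows "det A = prod (\<lambda>i. A $ i $ i) UNIV"
proof -
  let ?f = "\<lambda>p. of_int (sign p) * (\<Prod>i\<in>UNIV. A $ i $ p i)"
  let ?P = "{p. p permutes (UNIV::'n set)}"
  have fin: "finite ?P" by (simp add: finite_permutations)
  have idP: "id \<in> ?P" by (simp add: permutes_id)
  have "det A = sum ?f ?P" by (simp add: det_def)
  also have "\<dots> = ?f id + sum ?f (?P - {id})" by (rule sum.remove[OF fin idP])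
  also have "sum ?f (?P - {id}) = 0"
  proof (rule sum.neutral, rule ballI)
    fix p assume p: "p \<in> ?P - {id}"
    hence pp: "p permutes UNIV" and pid: "p \<noteq> id" by auto
    have inj: "inj p" using permutes_inj[OF pp] .
    obtain i where i: "p i \<noteq> i" using pid by (metis eq_id_iff)
    have "\<exists>k. A $ k $ p k = 0"
    proof (cases "p l = l")
      case False thus ?thesis using z[of l "p l"] by metis
    next
      case True
      have "p i \<noteq> l" using True i inj by (metis injD)
      thus ?thesis using z[of i "p i"] i by metis
    qed
    hence "(\<Prod>i\<in>UNIV. A $ i $ p i) = 0" by (metis UNIV_I finite prod_zero)
    thus "?f p = 0" by simp
  qed
  finally show ?thesis by simp
qed

lemma Lh_linear: "1 + z * lastc \<eta> \<noteq> 0 \<Longrightarrow> linear (Lh z \<eta>)"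
  using hz_deriv has_derivative_linear by blast

lemma lastc_axis: "lastc (axis j 1 :: real^'n::{finite,linorder}) = (if j = lastidx then 1 else 0)"
  by (simp add: lastc_def axis_def)

lemma axis_nth': "axis j (x::real) $ i = (if i = j then x else 0)"
  by (simp add: axis_def)

lemma eps_nth: "(eps :: real^'n::{finite,linorder}) $ i = (if i = lastidx then 1 else 0)"
  by (simp add: eps_def axis_def)

lemma det_Lh:
  fixes \<eta> :: "real^'n::{finite,linorder}"
  assumes D: "1 + z * lastc \<eta> \<noteq> 0"
  shows "det (matrix (Lh z \<eta>)) = (sqrt (1 - z\<^sup>2) / (1 + z * lastc \<eta>)) ^ (CARD('n) - 1) * ((1 - z\<^sup>2) / (1 + z * lastc \<eta>)\<^sup>2)"
proof -
  let ?M = "matrix (Lh z \<eta>)"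
  let ?a = "sqrt (1 - z\<^sup>2) / (1 + z * lastc \<eta>)"
  have ent: "?M $ i $ j = Lh z \<eta> (axis j 1) $ i" for i j by (simp add: matrix_def)
  have off: "?M $ i $ j = 0" if "i \<noteq> j" "j \<noteq> lastidx" for i j
    using that by (simp add: ent Lh_def lastc_axis axis_nth')
  have diag1: "?M $ i $ i = ?a" if "i \<noteq> lastidx" for i
    using that by (simp add: ent Lh_def lastc_axis axis_nth' eps_nth)
  have diag2: "?M $ lastidx $ lastidx = (1 - z\<^sup>2) / (1 + z * lastc \<eta>)\<^sup>2"
    by (simp add: ent Lh_def lastc_axis eps_nth lastc_def flip: eps_def)
  have "det ?M = prod (\<lambda>i. ?M $ i $ i) UNIV" by (rule det_lastcol[OF off])
  also have "\<dots> = ?M $ lastidx $ lastidx * prod (\<lambda>i. ?M $ i $ i) (UNIV - {lastidx})"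
    by (rule prod.remove) auto
  also have "prod (\<lambda>i. ?M $ i $ i) (UNIV - {lastidx}) = prod (\<lambda>i. ?a) (UNIV - {lastidx::'n})"
    using diag1 by (intro prod.cong refl) auto
  also have "\<dots> = ?a ^ (CARD('n) - 1)" by (simp add: card_Diff_singleton)
  finally show ?thesis using diag2 by simp
qed


lemma detl_in_small:
  fixes xs :: "(real^'n::{finite,linorder}) list"
  assumes l: "length xs = CARD('n)" and sub: "set ys \<subseteq> set xs" and W: "set ys \<subseteq> W"
    and dimW: "dim W < length ys" and dys: "distinct xs \<Longrightarrow> distinct ys"
  shows "detl xs = 0"
proof (cases "distinct xs")
  case False thus ?thesis using detl_not_distinct l by blast
next
  case True
  hence dy: "distinct ys" by (rule dys)
  have "dependent (set ys)"
  proof (rule ccontr)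
    assume ind: "independent (set ys)"
    have "card (set ys) \<le> dim W" by (rule independent_card_le_dim[OF W ind])
    thus False using dimW distinct_card[OF dy] by simp
  qed
  hence "dependent (set xs)" using sub dependent_mono by blast
  thus ?thesis using detl_dependent l by blast
qed

lemma detl_swap01:
  fixes xs :: "(real^'n::{finite,linorder}) list"
  assumes l: "length xs + 2 = CARD('n)"
  shows "detl (b # a # xs) = - detl (a # b # xs)"
proof -
  let ?\<Omega> = "\<lambda>vs::(real^'n::{finite,linorder}) list. if length vs = CARD('n) \<and> set vs \<subseteq> UNIV then 1 * detl ([] @ vs) else 0"
  have alt: "alt_form_on UNIV CARD('n) ?\<Omega>" by (rule alt_detl_prefix) auto
  have "?\<Omega> ((a # a # xs)[0 := b, 1 := a]) = - ?\<Omega> ((a # a # xs)[0 := a, 1 := b])"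
    by (rule alt_swap[OF alt subspace_UNIV]) (use l in auto)
  thus ?thesis using l by simp
qed

lemma dim_perp2:
  fixes \<eta> g :: "real^'n::{finite,linorder}"
  assumes ee: "\<eta> \<bullet> \<eta> = 1" and gg: "g \<bullet> g = 1" and eg: "\<eta> \<bullet> g = 0"
  shows "dim {v. v \<bullet> \<eta> = 0 \<and> v \<bullet> g = 0} = CARD('n) - 2"
proof -
  let ?A = "span {\<eta>, g}"
  have h: "dim {y \<in> UNIV. \<forall>x \<in> ?A. orthogonal x y} + dim ?A = dim (UNIV :: (real^'n::{finite,linorder}) set)"
    by (rule dim_subspace_orthogonal_to_vectors) (auto simp: subspace_span)
  have ne: "\<eta> \<noteq> g" using eg ee by auto
  have ind: "independent {\<eta>, g}"
    by (rule pairwise_orthogonal_independent) (use eg ee gg ne in \<open>auto simp: pairwise_def orthogonal_def inner_commute\<close>)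
  have dA: "dim ?A = 2" using dim_span_eq_card_independent[OF ind] ne by simp
  have "{y. \<forall>x \<in> ?A. orthogonal x y} = {v. v \<bullet> \<eta> = 0 \<and> v \<bullet> g = 0}"
  proof
    show "{y. \<forall>x \<in> ?A. orthogonal x y} \<subseteq> {v. v \<bullet> \<eta> = 0 \<and> v \<bullet> g = 0}"
      by (auto simp: orthogonal_def inner_commute span_base)
    show "{v. v \<bullet> \<eta> = 0 \<and> v \<bullet> g = 0} \<subseteq> {y. \<forall>x \<in> ?A. orthogonal x y}"
    proof safe
      fix y x assume y: "y \<bullet> \<eta> = 0" "y \<bullet> g = 0" and x: "x \<in> ?A"
      have "orthogonal y x"
        by (rule orthogonal_to_span[OF x]) (use y in \<open>auto simp: orthogonal_def\<close>)
      thus "orthogonal x y" by (simp add: orthogonal_commute)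
    qed
  qed
  thus ?thesis using h dA by simp
qed

lemma detl_G1:
  fixes \<eta> u :: "real^'n::{finite,linorder}"
  assumes ee: "\<eta> \<bullet> \<eta> = 1" and l: "length vs = CARD('n) - 1" and vs: "set vs \<subseteq> {v. v \<bullet> \<eta> = 0}"
    and d: "CARD('n) \<ge> 2"
  shows "detl (u # vs) = (u \<bullet> \<eta>) * detl (\<eta> # vs)"
proof -
  let ?W = "{v. v \<bullet> \<eta> = 0}"
  define u' where "u' = u - (u \<bullet> \<eta>) *\<^sub>R \<eta>"
  have u'W: "u' \<in> ?W" using ee by (simp add: u'_def inner_diff_left)
  have dimW: "dim ?W = CARD('n) - 1"
  proof -
    have "\<eta> \<noteq> 0" using ee by auto
    hence "dim {x. \<eta> \<bullet> x = 0} = CARD('n) - 1" using dim_hyperplane[of \<eta>] by simp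
    moreover have "{x. \<eta> \<bullet> x = 0} = ?W" by (auto simp: inner_commute)
    ultimately show ?thesis by simp
  qed
  have l1: "length (\<eta> # vs) = CARD('n)" using l d by simp
  have "detl ((\<eta> # vs)[0 := (u \<bullet> \<eta>) *\<^sub>R \<eta> + 1 *\<^sub>R u']) =
      (u \<bullet> \<eta>) * detl ((\<eta> # vs)[0 := \<eta>]) + 1 * detl ((\<eta> # vs)[0 := u'])"
    by (rule detl_lin[OF l1]) (use d in auto)
  moreover have "detl (u' # vs) = 0"
    by (rule detl_in_small[of _ "u' # vs" ?W]) (use l d u'W vs dimW in auto)
  ultimately show ?thesis by (simp add: u'_def)
qed

lemma detl_lin3:
  fixes xs :: "(real^'n::{finite,linorder}) list"
  assumes l: "length xs = CARD('n)" and i: "i < CARD('n)"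
  shows "detl (xs[i := a *\<^sub>R u + b *\<^sub>R v + x]) = a * detl (xs[i := u]) + b * detl (xs[i := v]) + detl (xs[i := x])"
proof -
  have l2: "length (xs[i := u]) = CARD('n)" using l by simp
  have "detl (xs[i := a *\<^sub>R u + 1 *\<^sub>R (b *\<^sub>R v + 1 *\<^sub>R x)]) = a * detl (xs[i := u]) + 1 * detl (xs[i := b *\<^sub>R v + 1 *\<^sub>R x])"
    by (rule detl_lin[OF l i])
  moreover have "detl (xs[i := b *\<^sub>R v + 1 *\<^sub>R x]) = b * detl (xs[i := v]) + 1 * detl (xs[i := x])"
    by (rule detl_lin[OF l i])
  ultimately show ?thesis by (simp add: add.assoc)
qed

lemma detl_G2:
  fixes \<eta> g y w :: "real^'n::{finite,linorder}"
  assumes ee: "\<eta> \<bullet> \<eta> = 1" and gg: "g \<bullet> g = 1" and eg: "\<eta> \<bullet> g = 0"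
    and l: "length vs = CARD('n) - 2" and vs: "set vs \<subseteq> {v. v \<bullet> \<eta> = 0 \<and> v \<bullet> g = 0}"
    and d: "CARD('n) \<ge> 3"
  shows "detl (y # w # vs) = ((y \<bullet> \<eta>) * (w \<bullet> g) - (y \<bullet> g) * (w \<bullet> \<eta>)) * detl (\<eta> # g # vs)"
proof -
  let ?W = "{v. v \<bullet> \<eta> = 0 \<and> v \<bullet> g = 0}"
  have dimW: "dim ?W = CARD('n) - 2" by (rule dim_perp2[OF ee gg eg])
  have Z0: "detl (x # p # vs) = 0" if "x \<in> ?W" for x p
    by (rule detl_in_small[of _ "x # vs" ?W]) (use l d vs that dimW in auto)
  have Z1: "detl (p # x # vs) = 0" if "x \<in> ?W" for x p
    by (rule detl_in_small[of _ "x # vs" ?W]) (use l d vs that dimW in auto)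
  have dec: "\<And>x. x = (x \<bullet> \<eta>) *\<^sub>R \<eta> + (x \<bullet> g) *\<^sub>R g + (x - (x \<bullet> \<eta>) *\<^sub>R \<eta> - (x \<bullet> g) *\<^sub>R g)" by simp
  have inW: "\<And>x. x - (x \<bullet> \<eta>) *\<^sub>R \<eta> - (x \<bullet> g) *\<^sub>R g \<in> ?W"
    using ee gg eg by (simp add: inner_diff_left inner_diff_right inner_commute)
  have L: "length (p # q # vs) = CARD('n)" for p q :: "real^'n::{finite,linorder}" using l d by simp
  have d0: "0 < CARD('n)" "1 < CARD('n)" using d by auto
  have e1: "detl (y # w # vs) = (y \<bullet> \<eta>) * detl (\<eta> # w # vs) + (y \<bullet> g) * detl (g # w # vs)"
  proof -
    have "detl ((y # w # vs)[0 := (y \<bullet> \<eta>) *\<^sub>R \<eta> + (y \<bullet> g) *\<^sub>R g + (y - (y \<bullet> \<eta>) *\<^sub>R \<eta> - (y \<bullet> g) *\<^sub>R g)])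
      = (y \<bullet> \<eta>) * detl ((y # w # vs)[0 := \<eta>]) + (y \<bullet> g) * detl ((y # w # vs)[0 := g])
        + detl ((y # w # vs)[0 := y - (y \<bullet> \<eta>) *\<^sub>R \<eta> - (y \<bullet> g) *\<^sub>R g])"
      by (rule detl_lin3[OF L d0(1)])
    thus ?thesis using Z0[OF inW] by (simp flip: dec)
  qed
  have e2: "detl (p # w # vs) = (w \<bullet> \<eta>) * detl (p # \<eta> # vs) + (w \<bullet> g) * detl (p # g # vs)" for p
  proof -
    have "detl ((p # w # vs)[1 := (w \<bullet> \<eta>) *\<^sub>R \<eta> + (w \<bullet> g) *\<^sub>R g + (w - (w \<bullet> \<eta>) *\<^sub>R \<eta> - (w \<bullet> g) *\<^sub>R g)])
      = (w \<bullet> \<eta>) * detl ((p # w # vs)[1 := \<eta>]) + (w \<bullet> g) * detl ((p # w # vs)[1 := g])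
        + detl ((p # w # vs)[1 := w - (w \<bullet> \<eta>) *\<^sub>R \<eta> - (w \<bullet> g) *\<^sub>R g])"
      by (rule detl_lin3[OF L d0(2)])
    thus ?thesis using Z1[OF inW] by (simp flip: dec)
  qed
  have same: "detl (p # p # vs) = 0" for p
    by (rule detl_eq_rows[of _ 0 1]) (use L d0 in auto)
  have sw: "detl (g # \<eta> # vs) = - detl (\<eta> # g # vs)" by (rule detl_swap01) (use l d in simp)
  show ?thesis using e1 e2[of \<eta>] e2[of g] same sw by (simp add: algebra_simps)
qed


definition Pp :: "real^'n::{finite,linorder} \<Rightarrow> real^'n::{finite,linorder}" where
  "Pp x = x - lastc x *\<^sub>R eps"

lemma eps_inner: "x \<bullet> eps = lastc x" "eps \<bullet> x = lastc x"
  by (simp_all add: lastc_inner inner_commute)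

lemma lastc_eps[simp]: "lastc (eps :: real^'n::{finite,linorder}) = 1"
  by (simp add: lastc_inner)

lemma lastc_add: "lastc (x + y) = lastc x + lastc y" and lastc_scale: "lastc (a *\<^sub>R x) = a * lastc x"
  and lastc_diff: "lastc (x - y) = lastc x - lastc y"
  by (simp_all add: lastc_def)

lemma Pp_eps[simp]: "Pp x \<bullet> eps = 0" "eps \<bullet> Pp x = 0"
  by (simp_all add: Pp_def inner_diff_left inner_diff_right eps_inner lastc_diff lastc_scale)

lemma Pp_inner: "Pp x \<bullet> y = x \<bullet> y - lastc x * lastc y" "y \<bullet> Pp x = x \<bullet> y - lastc x * lastc y"
  by (simp_all add: Pp_def inner_diff_left inner_diff_right eps_inner inner_commute lastc_diff lastc_scale)

lemma lastc_Pp[simp]: "lastc (Pp x) = 0"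
  by (simp add: Pp_def lastc_diff lastc_scale)

lemma Pp_Pp: "Pp x \<bullet> Pp y = x \<bullet> y - lastc x * lastc y"
  by (simp add: Pp_def[of y] inner_diff_right Pp_inner(1) eps_inner)

lemma Pp_add: "Pp (x + y) = Pp x + Pp y" and Pp_scale: "Pp (a *\<^sub>R x) = a *\<^sub>R Pp x"
  and Pp_eps0[simp]: "Pp eps = 0"
  by (simp_all add: Pp_def lastc_add lastc_scale algebra_simps)

lemma dec_Pp: "x = Pp x + lastc x *\<^sub>R eps"
  by (simp add: Pp_def)

lemma hz_P: "hz z \<eta> = (sqrt (1 - z\<^sup>2) / (1 + z * lastc \<eta>)) *\<^sub>R Pp \<eta> + ((z + lastc \<eta>) / (1 + z * lastc \<eta>)) *\<^sub>R eps"
  by (simp add: hz_fun Pp_def lastc_def)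

lemma Lh_P: "Lh z \<eta> v = (sqrt (1 - z\<^sup>2) / (1 + z * lastc \<eta>)) *\<^sub>R Pp v
   + (- (sqrt (1 - z\<^sup>2) * z * lastc v) / (1 + z * lastc \<eta>)\<^sup>2) *\<^sub>R Pp \<eta>
   + ((1 - z\<^sup>2) * lastc v / (1 + z * lastc \<eta>)\<^sup>2) *\<^sub>R eps"
  by (simp add: Lh_def Pp_def)

lemma lastc_sq_le: "x \<bullet> x = 1 \<Longrightarrow> (lastc x)\<^sup>2 \<le> 1"
proof -
  assume "x \<bullet> x = 1"
  moreover have "Pp x \<bullet> Pp x \<ge> 0" by simp
  ultimately show ?thesis by (simp add: Pp_Pp power2_eq_square)
qed

lemma D_pos:
  assumes "x \<bullet> x = 1" "-1 < z" "z < 1"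
  shows "1 + z * lastc x > 0"
proof -
  have "(lastc x)\<^sup>2 \<le> 1" by (rule lastc_sq_le[OF assms(1)])
  hence "\<bar>lastc x\<bar> \<le> 1" by (simp add: abs_square_le_1)
  moreover have "\<bar>z\<bar> < 1" using assms by auto
  ultimately have "\<bar>z * lastc x\<bar> < 1"
    by (metis abs_ge_zero abs_mult le_less_trans mult_le_one order.strict_implies_order mult_left_le)
  thus ?thesis by linarith
qed

lemma hz_unit:
  fixes \<eta> :: "real^'n::{finite,linorder}"
  assumes ee: "\<eta> \<bullet> \<eta> = 1" and z: "-1 < z" "z < 1"
  shows "hz z \<eta> \<bullet> hz z \<eta> = 1"
proof -
  define t where "t = lastc \<eta>"
  define D where "D = 1 + z * t"
  define s where "s = sqrt (1 - z\<^sup>2)"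
  have Dp: "D > 0" unfolding D_def t_def by (rule D_pos[OF ee z])
  have z2: "z\<^sup>2 < 1" using z by (simp add: abs_square_less_1 abs_less_iff)
  have ss: "s * s = 1 - z\<^sup>2" unfolding s_def using z2 by simp
  have "hz z \<eta> \<bullet> hz z \<eta> = (s / D)\<^sup>2 * (1 - t\<^sup>2) + ((z + t) / D)\<^sup>2"
    unfolding hz_P t_def[symmetric] D_def[symmetric] s_def[symmetric]
    using Dp by (simp add: inner_add_left inner_add_right Pp_Pp ee t_def power2_eq_square field_simps)
  also have "\<dots> = (s * s * (1 - t\<^sup>2) + (z + t)\<^sup>2) / D\<^sup>2"
    using Dp by (simp add: field_simps power2_eq_square)
  also have "s * s * (1 - t\<^sup>2) + (z + t)\<^sup>2 = D\<^sup>2" unfolding ss D_def by (simp add: power2_eq_square algebra_simps)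
  finally show ?thesis using Dp by simp
qed


lemma Lh_tan_sphere:
  fixes \<eta> v :: "real^'n::{finite,linorder}"
  assumes ee: "\<eta> \<bullet> \<eta> = 1" and z: "-1 < z" "z < 1" and v: "v \<bullet> \<eta> = 0"
  shows "Lh z \<eta> v \<bullet> hz z \<eta> = 0"
proof -
  define t where "t = lastc \<eta>"
  define D where "D = 1 + z * t"
  define s where "s = sqrt (1 - z\<^sup>2)"
  define u where "u = lastc v"
  have Dp: "D > 0" unfolding D_def t_def by (rule D_pos[OF ee z])
  have z2: "z\<^sup>2 < 1" using z by (simp add: abs_square_less_1 abs_less_iff)
  have ss: "s * s = 1 - z\<^sup>2" unfolding s_def using z2 by simp
  have "Lh z \<eta> v \<bullet> hz z \<eta> = (s/D) * (s/D) * (- u * t) + (- (s * z * u) / D\<^sup>2) * (s / D) * (1 - t * t)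
      + ((1 - z\<^sup>2) * u / D\<^sup>2) * ((z + t) / D)"
    unfolding hz_P Lh_P t_def[symmetric] D_def[symmetric] s_def[symmetric] u_def[symmetric]
    by (simp add: inner_add_left inner_add_right inner_diff_left inner_diff_right Pp_Pp ee v t_def u_def inner_commute[of \<eta> v] eps_inner lastc_add lastc_diff lastc_scale) (use Dp in \<open>simp add: field_simps\<close>)
  also have "\<dots> = 0"
  proof -
    have "(s/D) * (s/D) * (- u * t) + (- (s * z * u) / D\<^sup>2) * (s / D) * (1 - t * t)
      + ((1 - z\<^sup>2) * u / D\<^sup>2) * ((z + t) / D) = ((s * s) * (- u * t) * D - (s * s) * z * u * (1 - t * t) + (1 - z\<^sup>2) * u * (z + t)) / D^3"
      using Dp by (simp add: field_simps power2_eq_square power3_eq_cube)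
    also have "(s * s) * (- u * t) * D - (s * s) * z * u * (1 - t * t) + (1 - z\<^sup>2) * u * (z + t) = 0"
      unfolding ss D_def by (simp add: algebra_simps power2_eq_square)
    finally show ?thesis by simp
  qed
  finally show ?thesis .
qed

lemma gz_P: "gz z \<xi> = (1 / sqrt (1 - z\<^sup>2 * (lastc \<xi>)\<^sup>2)) *\<^sub>R (Pp \<xi> + (sqrt (1 - z\<^sup>2) * lastc \<xi>) *\<^sub>R eps)"
  by (auto simp: gz_def Pp_def vec_eq_iff eps_nth lastc_def)

lemma z2_lt: "-1 < z \<Longrightarrow> z < 1 \<Longrightarrow> z\<^sup>2 < (1::real)"
  by (simp add: abs_square_less_1 abs_less_iff)

lemma r_pos:
  assumes "\<xi> \<bullet> \<xi> = 1" "-1 < z" "z < 1"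
  shows "1 - z\<^sup>2 * (lastc \<xi>)\<^sup>2 > 0"
proof -
  have "(lastc \<xi>)\<^sup>2 \<le> 1" by (rule lastc_sq_le[OF assms(1)])
  moreover have "z\<^sup>2 < 1" using z2_lt assms by blast
  ultimately have "z\<^sup>2 * (lastc \<xi>)\<^sup>2 < 1"
    by (metis mult_le_one mult_less_cancel_right1 not_le order_le_less_trans zero_le_power2 power2_less_0 linorder_not_less mult.commute)
  thus ?thesis by simp
qed

lemma gz_unit:
  fixes \<xi> :: "real^'n::{finite,linorder}"
  assumes xx: "\<xi> \<bullet> \<xi> = 1" and z: "-1 < z" "z < 1"
  shows "gz z \<xi> \<bullet> gz z \<xi> = 1"
proof -
  define x where "x = lastc \<xi>"
  define s where "s = sqrt (1 - z\<^sup>2)"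
  define r where "r = sqrt (1 - z\<^sup>2 * x\<^sup>2)"
  have ss: "s * s = 1 - z\<^sup>2" unfolding s_def using z2_lt[OF z] by simp
  have rp0: "1 - z\<^sup>2 * x\<^sup>2 > 0" unfolding x_def by (rule r_pos[OF xx z])
  have rr: "r * r = 1 - z\<^sup>2 * x\<^sup>2" unfolding r_def using rp0 by simp
  have rp: "r > 0" unfolding r_def using rp0 by simp
  have "gz z \<xi> \<bullet> gz z \<xi> = (1 / r) * (1 / r) * ((1 - x * x) + (s * x) * (s * x))"
    unfolding gz_P x_def[symmetric] s_def[symmetric] r_def[symmetric]
    by (simp add: inner_add_left inner_add_right Pp_Pp xx x_def eps_inner lastc_add lastc_scale algebra_simps)
  also have "(1 - x * x) + (s * x) * (s * x) = r * r" unfolding rr using ss unfolding power2_eq_square by algebra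
  finally show ?thesis using rp by simp
qed


lemmas inner_expand = inner_add_left inner_add_right inner_diff_left inner_diff_right
  inner_scaleR_left inner_scaleR_right Pp_Pp Pp_inner eps_inner lastc_add lastc_diff lastc_scale lastc_Pp

lemma Pp_idem[simp]: "Pp (Pp x) = Pp x"
  by (simp add: Pp_def[of "Pp x"])

lemma scal_Q:
  fixes s z t x k r D :: real
  assumes ss: "s * s = 1 - z\<^sup>2" and DD: "D = 1 + z * t" and hk: "k - x * t = - s * x * t" and rr: "r * r = 1 - z\<^sup>2 * x\<^sup>2"
    and sp: "s > 0" and rp: "r > 0" and Dp: "D > 0"
  shows "(D / (s * s) * (1 + z * t)) * ((1 / r) * ((D / s) * (1 - x * x) + (D * z * x / (s * s)) * (k - t * x) + (D * D * x / (s * s)) * (s * x)))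
       - ((D / (s * s)) * (1 / r) * ((k - x * t) + s * x * t + z * s * x)) * ((D / s) * (k - x * t) + (D * z * x / (s * s)) * (1 - t * t) + (D * D * x / (s * s)) * t)
       = D ^ 3 * r / s ^ 3"
proof -
  have hk': "k - x * t + s * x * t = 0" using hk by simp
  have "(D / (s * s) * (1 + z * t)) * ((1 / r) * ((D / s) * (1 - x * x) + (D * z * x / (s * s)) * (k - t * x) + (D * D * x / (s * s)) * (s * x)))
       - ((D / (s * s)) * (1 / r) * ((k - x * t) + s * x * t + z * s * x)) * ((D / s) * (k - x * t) + (D * z * x / (s * s)) * (1 - t * t) + (D * D * x / (s * s)) * t)
     = (D * D * (D * s * (1 - x * x) + D * z * x * (k - t * x) + D * D * x * s * x) - D * (z * s * x + (k - x * t + s * x * t)) * (D * s * (k - x * t) + D * z * x * (1 - t * t) + D * D * x * t)) / (s^4 * r)"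
    unfolding DD[symmetric] using sp rp by (simp add: field_simps power_def)
  also have "\<dots> = D ^ 3 * r / s ^ 3"
  proof -
    have "(D * D * (D * s * (1 - x * x) + D * z * x * (k - t * x) + D * D * x * s * x) - D * (z * s * x + (k - x * t + s * x * t)) * (D * s * (k - x * t) + D * z * x * (1 - t * t) + D * D * x * t)) = D^3 * r * r * s"
      using ss DD hk rr by algebra
    thus ?thesis using sp rp by (simp add: field_simps power_def)
  qed
  finally show ?thesis .
qed

locale hzs =
  fixes z :: real and \<xi> \<eta> :: "real^'n::{finite,linorder}"
  assumes z: "-1 < z" "z < 1" and xx: "\<xi> \<bullet> \<xi> = 1" and ee: "\<eta> \<bullet> \<eta> = 1"
begin

definition "t = lastc \<eta>"
definition "x = lastc \<xi>"
definition "D = 1 + z * t"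
definition "s = sqrt (1 - z\<^sup>2)"
definition "r = sqrt (1 - z\<^sup>2 * x\<^sup>2)"
definition "k = \<xi> \<bullet> \<eta>"
definition "g = gz z \<xi>"
definition "yv = (D / (s * s)) *\<^sub>R (\<eta> + z *\<^sub>R eps)"
definition "wv = (D / s) *\<^sub>R Pp \<xi> + (D * z * x / (s * s)) *\<^sub>R Pp \<eta> + (D * D * x / (s * s)) *\<^sub>R eps"

lemma Dp: "D > 0" unfolding D_def t_def by (rule D_pos[OF ee z])
lemma ss: "s * s = 1 - z\<^sup>2" unfolding s_def using z2_lt[OF z] by simp
lemma sp: "s > 0" unfolding s_def using z2_lt[OF z] by simp
lemma rp0: "1 - z\<^sup>2 * x\<^sup>2 > 0" unfolding x_def by (rule r_pos[OF xx z])
lemma rr: "r * r = 1 - z\<^sup>2 * x\<^sup>2" unfolding r_def using rp0 by simp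
lemma rp: "r > 0" unfolding r_def using rp0 by simp

lemma g_P: "g = (1 / r) *\<^sub>R (Pp \<xi> + (s * x) *\<^sub>R eps)"
  unfolding g_def gz_P r_def s_def x_def ..

lemma hz_P': "hz z \<eta> = (s / D) *\<^sub>R Pp \<eta> + ((z + t) / D) *\<^sub>R eps"
  unfolding hz_P s_def D_def t_def ..

lemma Lh_P': "Lh z \<eta> v = (s / D) *\<^sub>R Pp v + (- (s * z * lastc v) / D\<^sup>2) *\<^sub>R Pp \<eta> + ((1 - z\<^sup>2) * lastc v / D\<^sup>2) *\<^sub>R eps"
  unfolding Lh_P s_def D_def t_def ..

lemma g_eta: "g \<bullet> \<eta> = (1 / r) * ((k - x * t) + s * x * t)"
  unfolding g_P by (simp add: inner_expand k_def x_def t_def inner_commute algebra_simps)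

lemma hk: assumes "g \<bullet> \<eta> = 0" shows "k - x * t = - s * x * t"
proof -
  have "(1 / r) * ((k - x * t) + s * x * t) = 0" using assms g_eta by simp
  hence "(k - x * t) + s * x * t = 0" using rp by simp
  thus ?thesis by (simp add: algebra_simps)
qed

lemma xi_hz: assumes "g \<bullet> \<eta> = 0" shows "\<xi> \<bullet> hz z \<eta> = z * x"
proof -
  have "\<xi> \<bullet> hz z \<eta> = (s / D) * (k - x * t) + ((z + t) / D) * x"
    unfolding hz_P' by (simp add: inner_expand k_def x_def t_def inner_commute algebra_simps)
  also have "\<dots> = (s * (k - x * t) + (z + t) * x) / D" using Dp by (simp add: field_simps)
  also have "s * (k - x * t) + (z + t) * x = z * x * D"
    using hk[OF assms] ss unfolding D_def power2_eq_square by algebra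
  finally show ?thesis using Dp by simp
qed

lemma Lh_xi: assumes "g \<bullet> \<eta> = 0" and v1: "v \<bullet> \<eta> = 0" and v2: "v \<bullet> g = 0"
  shows "Lh z \<eta> v \<bullet> \<xi> = 0"
proof -
  define u where "u = lastc v"
  define m where "m = v \<bullet> \<xi>"
  have "v \<bullet> g = (1 / r) * ((m - u * x) + s * x * u)"
    unfolding g_P by (simp add: inner_expand m_def u_def x_def inner_commute algebra_simps)
  hence hv: "(m - u * x) + s * x * u = 0" using v2 rp by simp
  have "Lh z \<eta> v \<bullet> \<xi> = (s / D) * (m - u * x) + (- (s * z * u) / D\<^sup>2) * (k - t * x) + ((1 - z\<^sup>2) * u / D\<^sup>2) * x"
    unfolding Lh_P' by (simp add: inner_expand k_def x_def t_def m_def u_def inner_commute algebra_simps)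
  also have "\<dots> = (s * D * (m - u * x) - s * z * u * (k - t * x) + (1 - z\<^sup>2) * u * x) / D\<^sup>2"
    using Dp by (simp add: field_simps power2_eq_square)
  also have "s * D * (m - u * x) - s * z * u * (k - t * x) + (1 - z\<^sup>2) * u * x = 0"
    using hk[OF assms(1)] ss hv unfolding D_def power2_eq_square by algebra
  finally show ?thesis by simp
qed

lemma Lh_y: "Lh z \<eta> yv = hz z \<eta>"
proof -
  have e: "Lh z \<eta> yv = ((s/D)*(D/(s * s)) + (- (s*z*((D/(s * s))*(t+z)))/D\<^sup>2)) *\<^sub>R Pp \<eta> + ((1-z\<^sup>2)*((D/(s * s))*(t+z))/D\<^sup>2) *\<^sub>R eps"
    unfolding Lh_P' yv_def by (simp add: Pp_add Pp_scale lastc_add lastc_scale t_def scaleR_add_left scaleR_diff_left)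
  have c1: "(s/D)*(D/(s * s)) + (- (s*z*((D/(s * s))*(t+z)))/D\<^sup>2) = s/D"
  proof -
    have "(s/D)*(D/(s * s)) + (- (s*z*((D/(s * s))*(t+z)))/D\<^sup>2) = (D - z * (t + z)) / (s * D)"
      using Dp sp by (simp add: field_simps power2_eq_square)
    also have "D - z * (t + z) = s * s" unfolding ss D_def by (simp add: algebra_simps power2_eq_square)
    finally show ?thesis using sp Dp by simp
  qed
  have c2: "(1-z\<^sup>2)*((D/(s * s))*(t+z))/D\<^sup>2 = (z + t) / D"
    unfolding ss[symmetric] using Dp sp by (simp add: field_simps power2_eq_square)
  show ?thesis unfolding e c1 c2 hz_P' ..
qed

lemma Lh_w: "Lh z \<eta> wv = \<xi>"
proof -
  have e: "Lh z \<eta> wv = ((s/D)*(D/s)) *\<^sub>R Pp \<xi> + ((s/D)*(D*z*x/(s * s)) + (- (s*z*(D*D*x/(s * s)))/D\<^sup>2)) *\<^sub>R Pp \<eta>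
      + ((1-z\<^sup>2)*(D*D*x/(s * s))/D\<^sup>2) *\<^sub>R eps"
    unfolding Lh_P' wv_def by (simp add: Pp_add Pp_scale lastc_add lastc_scale scaleR_add_left scaleR_diff_left scaleR_add_right)
  have c1: "(s/D)*(D/s) = 1" using sp Dp by simp
  have c2: "(s/D)*(D*z*x/(s * s)) + (- (s*z*(D*D*x/(s * s)))/D\<^sup>2) = 0"
    using sp Dp by (simp add: field_simps power2_eq_square)
  have c3: "(1-z\<^sup>2)*(D*D*x/(s * s))/D\<^sup>2 = x"
    unfolding ss[symmetric] using Dp sp by (simp add: field_simps power2_eq_square)
  have "Lh z \<eta> wv = Pp \<xi> + x *\<^sub>R eps" unfolding e c1 c2 c3 by simp
  also have "\<dots> = \<xi>" unfolding x_def using dec_Pp[of \<xi>] by simp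
  finally show ?thesis .
qed

lemma y_eta: "yv \<bullet> \<eta> = (D / (s * s)) * (1 + z * t)"
  unfolding yv_def by (simp add: inner_expand ee t_def algebra_simps add_divide_distrib)

lemma y_g: "yv \<bullet> g = (D / (s * s)) * (1 / r) * ((k - x * t) + s * x * t + z * s * x)"
  unfolding yv_def g_P using sp rp by (simp add: inner_expand k_def x_def t_def inner_commute field_simps)

lemma w_eta: "wv \<bullet> \<eta> = (D / s) * (k - x * t) + (D * z * x / (s * s)) * (1 - t * t) + (D * D * x / (s * s)) * t"
  unfolding wv_def by (simp add: inner_expand k_def x_def t_def ee inner_commute algebra_simps)

lemma w_g: "wv \<bullet> g = (1 / r) * ((D / s) * (1 - x * x) + (D * z * x / (s * s)) * (k - t * x) + (D * D * x / (s * s)) * (s * x))"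
  unfolding wv_def g_P using sp rp by (simp add: inner_expand k_def x_def t_def xx inner_commute field_simps)

lemma Qval: assumes "g \<bullet> \<eta> = 0"
  shows "(yv \<bullet> \<eta>) * (wv \<bullet> g) - (yv \<bullet> g) * (wv \<bullet> \<eta>) = D ^ 3 * r / s ^ 3"
  unfolding y_eta y_g w_eta w_g
  by (rule scal_Q[OF ss D_def hk[OF assms] rr sp rp Dp])

end


lemma frechet_Lh:
  fixes \<eta> :: "real^'n::{finite,linorder}"
  assumes "1 + z * lastc \<eta> \<noteq> 0"
  shows "frechet_derivative (hz z) (at \<eta>) = Lh z \<eta>"
  using frechet_derivative_at[OF hz_deriv[OF assms]] by simp

lemma sub_part:
  fixes z :: real and \<xi> \<eta> :: "real^'n::{finite,linorder}"
  assumes d: "CARD('n) \<ge> 3" and z: "-1 < z" "z < 1" and xs: "\<xi> \<in> sphere 0 1"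
    and eC: "\<eta> \<in> Cz 0 (gz z \<xi>)" and l: "length vs = CARD('n) - 2" and vs: "set vs \<subseteq> tan_subsph (gz z \<xi>) \<eta>"
  shows "dSub \<xi> (hz z \<eta>) (map (frechet_derivative (hz z) (at \<eta>)) vs)
            = (sqrt (1 - z\<^sup>2) / (1 + z * lastc \<eta>)) ^ (CARD('n) - 2) * dSub (gz z \<xi>) \<eta> vs"
proof -
  let ?g = "gz z \<xi>"
  have xx: "\<xi> \<bullet> \<xi> = 1" using xs by (simp add: norm_eq_1)
  have ee: "\<eta> \<bullet> \<eta> = 1" and ge: "?g \<bullet> \<eta> = 0"
    using eC by (auto simp: Cz_def subsph_def norm_eq_1)
  have H: "hzs z \<xi> \<eta>" unfolding hzs_def using z xx ee by simp
  have gdef: "hzs.g z \<xi> = ?g" by (simp add: hzs.g_def[OF H])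
  have ge': "hzs.g z \<xi> \<bullet> \<eta> = 0" using ge gdef by simp
  have gg: "?g \<bullet> ?g = 1" by (rule gz_unit[OF xx z])
  have Dp: "hzs.D z \<eta> > 0" by (rule hzs.Dp[OF H])
  have Dd: "hzs.D z \<eta> = 1 + z * lastc \<eta>" by (simp add: hzs.D_def[OF H] hzs.t_def[OF H])
  have sd: "hzs.s z = sqrt (1 - z\<^sup>2)" by (simp add: hzs.s_def[OF H])
  have D0: "1 + z * lastc \<eta> \<noteq> 0" using Dp Dd by simp
  let ?L = "Lh z \<eta>"
  have fr: "frechet_derivative (hz z) (at \<eta>) = ?L" by (rule frechet_Lh[OF D0])
  have vsW: "set vs \<subseteq> {v. v \<bullet> \<eta> = 0 \<and> v \<bullet> ?g = 0}" using vs by (auto simp: tan_subsph_def)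
  have hh: "hz z \<eta> \<bullet> hz z \<eta> = 1" by (rule hz_unit[OF ee z])
  have xh: "\<xi> \<bullet> hz z \<eta> = z * lastc \<xi>" using hzs.xi_hz[OF H ge'] by (simp add: hzs.x_def[OF H])
  have rp0: "1 - z\<^sup>2 * (lastc \<xi>)\<^sup>2 > 0" by (rule r_pos[OF xx z])
  have rd: "hzs.r z \<xi> = sqrt (1 - (\<xi> \<bullet> hz z \<eta>)\<^sup>2)" by (simp add: hzs.r_def[OF H] hzs.x_def[OF H] xh power_mult_distrib)
  have abs1: "\<bar>\<xi> \<bullet> hz z \<eta>\<bar> < 1"
  proof -
    have "(\<xi> \<bullet> hz z \<eta>)\<^sup>2 < 1" using rp0 xh by (simp add: power_mult_distrib)
    thus ?thesis by (simp add: abs_square_less_1)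
  qed
  have LvT: "set (map ?L vs) \<subseteq> tan_subsph \<xi> (hz z \<eta>)"
  proof
    fix u assume "u \<in> set (map ?L vs)"
    then obtain v where v: "v \<in> set vs" "u = ?L v" by auto
    have v1: "v \<bullet> \<eta> = 0" and v2: "v \<bullet> ?g = 0" using v vsW by auto
    have "?L v \<bullet> hz z \<eta> = 0" by (rule Lh_tan_sphere[OF ee z v1])
    moreover have "?L v \<bullet> \<xi> = 0" using hzs.Lh_xi[OF H ge' v1] v2 gdef by simp
    ultimately show "u \<in> tan_subsph \<xi> (hz z \<eta>)" using v by (simp add: tan_subsph_def)
  qed
  have lhs1: "dSub \<xi> (hz z \<eta>) (map ?L vs) = (1 / hzs.r z \<xi>) * detl ([hz z \<eta>, \<xi>] @ map ?L vs)"
  proof -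
    have n1: "norm (hz z \<eta>) = 1" "norm \<xi> = 1" using hh xx by (simp_all add: norm_eq_1)
    show ?thesis unfolding dSub_eq[OF n1 abs1 d] using LvT l rd by simp
  qed
  have eqlist: "[hz z \<eta>, \<xi>] @ map ?L vs = map ?L (hzs.yv z \<eta> # hzs.wv z \<xi> \<eta> # vs)"
    using hzs.Lh_y[OF H] hzs.Lh_w[OF H] by simp
  have lin: "linear ?L" by (rule Lh_linear[OF D0])
  have l3: "length (hzs.yv z \<eta> # hzs.wv z \<xi> \<eta> # vs) = CARD('n)" using l d by simp
  have G2: "detl (hzs.yv z \<eta> # hzs.wv z \<xi> \<eta> # vs) =
      ((hzs.yv z \<eta> \<bullet> \<eta>) * (hzs.wv z \<xi> \<eta> \<bullet> ?g) - (hzs.yv z \<eta> \<bullet> ?g) * (hzs.wv z \<xi> \<eta> \<bullet> \<eta>)) * detl (\<eta> # ?g # vs)"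
    by (rule detl_G2[OF ee gg _ l vsW d]) (use ge in \<open>simp add: inner_commute\<close>)
  have Q: "(hzs.yv z \<eta> \<bullet> \<eta>) * (hzs.wv z \<xi> \<eta> \<bullet> ?g) - (hzs.yv z \<eta> \<bullet> ?g) * (hzs.wv z \<xi> \<eta> \<bullet> \<eta>)
      = hzs.D z \<eta> ^ 3 * hzs.r z \<xi> / hzs.s z ^ 3"
    using hzs.Qval[OF H ge'] gdef by simp
  have dM: "det (matrix ?L) = (hzs.s z / hzs.D z \<eta>) ^ (CARD('n) - 1) * ((hzs.s z * hzs.s z) / (hzs.D z \<eta>)\<^sup>2)"
    using det_Lh[OF D0] hzs.ss[OF H] by (simp add: Dd sd)
  have ge2: "\<bar>?g \<bullet> \<eta>\<bar> < 1" using ge by simp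
  have rhs1: "dSub ?g \<eta> vs = detl (\<eta> # ?g # vs)"
  proof -
    have n1: "norm \<eta> = 1" "norm ?g = 1" using ee gg by (simp_all add: norm_eq_1)
    show ?thesis unfolding dSub_eq[OF n1 ge2 d] using vs l ge by simp
  qed
  define S where "S = hzs.s z"
  define DD where "DD = hzs.D z \<eta>"
  define R where "R = hzs.r z \<xi>"
  define X where "X = detl (\<eta> # ?g # vs)"
  have Sp: "S > 0" unfolding S_def by (rule hzs.sp[OF H])
  have Rp: "R > 0" unfolding R_def by (rule hzs.rp[OF H])
  have DDp: "DD > 0" unfolding DD_def by (rule Dp)
  have e: "CARD('n) - 1 = Suc (CARD('n) - 2)" using d by simp
  have "dSub \<xi> (hz z \<eta>) (map ?L vs) = (1 / R) * ((S / DD) ^ (CARD('n) - 1) * ((S * S) / DD\<^sup>2) * ((DD ^ 3 * R / S ^ 3) * X))"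
    unfolding lhs1 eqlist detl_map_linear[OF lin l3] G2 Q dM S_def DD_def R_def X_def ..
  also have "\<dots> = (S / DD) ^ (CARD('n) - 2) * X"
    unfolding e using Sp Rp DDp by (simp add: field_simps power2_eq_square power3_eq_cube)
  finally show ?thesis unfolding fr rhs1 S_def DD_def X_def sd Dd .
qed

lemma sphere_part:
  fixes z :: real and \<xi> \<eta> :: "real^'n::{finite,linorder}"
  assumes d: "CARD('n) \<ge> 3" and z: "-1 < z" "z < 1" and xs: "\<xi> \<in> sphere 0 1"
    and es: "\<eta> \<in> sphere 0 1" and l: "length vs = CARD('n) - 1" and vs: "set vs \<subseteq> tan_sphere \<eta>"
  shows "dSphere (hz z \<eta>) (map (frechet_derivative (hz z) (at \<eta>)) vs)
            = (sqrt (1 - z\<^sup>2) / (1 + z * lastc \<eta>)) ^ (CARD('n) - 1) * dSphere \<eta> vs"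
proof -
  have xx: "\<xi> \<bullet> \<xi> = 1" using xs by (simp add: norm_eq_1)
  have ee: "\<eta> \<bullet> \<eta> = 1" using es by (simp add: norm_eq_1)
  have H: "hzs z \<xi> \<eta>" unfolding hzs_def using z xx ee by simp
  have Dp: "hzs.D z \<eta> > 0" by (rule hzs.Dp[OF H])
  have Dd: "hzs.D z \<eta> = 1 + z * lastc \<eta>" by (simp add: hzs.D_def[OF H] hzs.t_def[OF H])
  have sd: "hzs.s z = sqrt (1 - z\<^sup>2)" by (simp add: hzs.s_def[OF H])
  have D0: "1 + z * lastc \<eta> \<noteq> 0" using Dp Dd by simp
  let ?L = "Lh z \<eta>"
  have fr: "frechet_derivative (hz z) (at \<eta>) = ?L" by (rule frechet_Lh[OF D0])
  have hh: "hz z \<eta> \<bullet> hz z \<eta> = 1" by (rule hz_unit[OF ee z])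
  have d2: "CARD('n) \<ge> 2" using d by simp
  have vsW: "set vs \<subseteq> {v. v \<bullet> \<eta> = 0}" using vs by (auto simp: tan_sphere_def)
  have LvT: "set (map ?L vs) \<subseteq> tan_sphere (hz z \<eta>)"
  proof
    fix u assume "u \<in> set (map ?L vs)"
    then obtain v where v: "v \<in> set vs" "u = ?L v" by auto
    have v1: "v \<bullet> \<eta> = 0" using v vsW by auto
    have "?L v \<bullet> hz z \<eta> = 0" by (rule Lh_tan_sphere[OF ee z v1])
    thus "u \<in> tan_sphere (hz z \<eta>)" using v by (simp add: tan_sphere_def)
  qed
  have lhs1: "dSphere (hz z \<eta>) (map ?L vs) = detl ([hz z \<eta>] @ map ?L vs)"
  proof -
    have n1: "norm (hz z \<eta>) = 1" using hh by (simp add: norm_eq_1)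
    show ?thesis unfolding dSphere_eq[OF n1 d2] using LvT l by simp
  qed
  have rhs1: "dSphere \<eta> vs = detl ([\<eta>] @ vs)"
  proof -
    have n1: "norm \<eta> = 1" using ee by (simp add: norm_eq_1)
    show ?thesis unfolding dSphere_eq[OF n1 d2] using vs l by simp
  qed
  have eqlist: "[hz z \<eta>] @ map ?L vs = map ?L (hzs.yv z \<eta> # vs)"
    using hzs.Lh_y[OF H] by simp
  have lin: "linear ?L" by (rule Lh_linear[OF D0])
  have l2: "length (hzs.yv z \<eta> # vs) = CARD('n)" using l d by simp
  have G1: "detl (hzs.yv z \<eta> # vs) = (hzs.yv z \<eta> \<bullet> \<eta>) * detl (\<eta> # vs)"
    by (rule detl_G1[OF ee l vsW d2])
  have ye: "hzs.yv z \<eta> \<bullet> \<eta> = hzs.D z \<eta> / (hzs.s z * hzs.s z) * hzs.D z \<eta>"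
    using hzs.y_eta[OF H] by (simp add: hzs.D_def[OF H])
  have dM: "det (matrix ?L) = (hzs.s z / hzs.D z \<eta>) ^ (CARD('n) - 1) * ((hzs.s z * hzs.s z) / (hzs.D z \<eta>)\<^sup>2)"
    using det_Lh[OF D0] hzs.ss[OF H] by (simp add: Dd sd)
  define S where "S = hzs.s z"
  define DD where "DD = hzs.D z \<eta>"
  define X where "X = detl (\<eta> # vs)"
  have Sp: "S > 0" unfolding S_def by (rule hzs.sp[OF H])
  have DDp: "DD > 0" unfolding DD_def by (rule Dp)
  have "dSphere (hz z \<eta>) (map ?L vs) = (S / DD) ^ (CARD('n) - 1) * ((S * S) / DD\<^sup>2) * ((DD / (S * S) * DD) * X)"
    unfolding lhs1 eqlist detl_map_linear[OF lin l2] G1 ye dM S_def DD_def X_def ..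
  also have "\<dots> = (S / DD) ^ (CARD('n) - 1) * X"
    using Sp DDp by (simp add: field_simps power2_eq_square)
  finally show ?thesis unfolding fr rhs1 S_def DD_def X_def sd Dd by simp
qed

theorem mainTheorem2:
  fixes z :: real and \<xi> :: "real^'n::{finite,linorder}"
  assumes "CARD('n) \<ge> 3" and "-1 < z" and "z < 1" and "\<xi> \<in> sphere 0 1"
  shows "(\<forall>\<eta> \<in> Cz 0 (gz z \<xi>). \<forall>vs. length vs = CARD('n) - 2 \<and> set vs \<subseteq> tan_subsph (gz z \<xi>) \<eta> \<longrightarrow>
            dSub \<xi> (hz z \<eta>) (map (frechet_derivative (hz z) (at \<eta>)) vs)
            = (sqrt (1 - z\<^sup>2) / (1 + z * lastc \<eta>)) ^ (CARD('n) - 2) * dSub (gz z \<xi>) \<eta> vs)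
       \<and> (\<forall>\<eta> \<in> (sphere 0 1 :: (real^'n::{finite,linorder}) set). \<forall>vs. length vs = CARD('n) - 1 \<and> set vs \<subseteq> tan_sphere \<eta> \<longrightarrow>
            dSphere (hz z \<eta>) (map (frechet_derivative (hz z) (at \<eta>)) vs)
            = (sqrt (1 - z\<^sup>2) / (1 + z * lastc \<eta>)) ^ (CARD('n) - 1) * dSphere \<eta> vs)"
  using sub_part[OF assms] sphere_part[OF assms] by blast


end
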